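(* Let $k\in\mathbb C$ with $\Re(k)>0$, let $f:\mathbb Q\to\mathbb C$ be $1$-periodic, and let $h:\mathbb R\setminus\{0\}\to\mathbb C$ satisfy $h(x)=f(x)-|x|^{-k}f(-1/x)$ for $x\in\mathbb Q\setminus\{0\}$ and $h(x)=O(|x|^{-\Re(k)})$ for $0<|x|\leq1$. Then the function $$f^\ast(x):=\begin{cases} q^{-k}f(\overline{x}) & x=\tfrac aq\in\mathbb Q,\\ \lim_{\mathbb Q\ni y=\frac aq\to x}q^{-k}f(\overline{y}) & x\notin\mathbb Q\end{cases}$$ is well defined and is a continuous function of $x\in\mathbb R\setminus\mathbb Q$. Furthermore, if $h(x)=o(|x|^{-\Re(k)})$ as $x\to0$, then $f^\ast$ is continuous on $\mathbb R$. Finally, there exists a set $X\subset\mathbb R$ of full Lebesgue measure such that $f^\ast$ is $\alpha$-Hölder continuous at every point of $X$, for every $\alpha<\frac12\Re(k)$. In particular, if $\Re(k)>2$, then $f^\ast$ has derivative zero almost everywhere.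
   Context: For a rational $x=a/q$ in reduced form with $q\ge1$, $\overline{x}:=\overline{a}_q/q$ where $\overline a_q\in(0,q]$ is the integer with $a\overline a_q\equiv1\pmod q$. In the limit, $y=a/q$ is written in reduced form. *)

theory Defs
  imports "HOL-Analysis.Analysis" "HOL-Number_Theory.Cong"
begin

text \<open>Reduced form of a rational: quotient_of y = (a, q) with q > 0, coprime a q.\<close>
definition rnum :: "rat \<Rightarrow> int" where "rnum y = fst (quotient_of y)"
definition rden :: "rat \<Rightarrow> int" where "rden y = snd (quotient_of y)"

definition inv_rep :: "int \<Rightarrow> int \<Rightarrow> int" where
  "inv_rep a q = (THE b. 0 < b \<and> b \<le> q \<and> [a * b = 1] (mod q))"

text \<open>overline x = abar_q / q for x = a/q in reduced form.\<close>
definition rat_bar :: "rat \<Rightarrow> rat" where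
  "rat_bar y = of_int (inv_rep (rnum y) (rden y)) / of_int (rden y)"

definition fstar_rat :: "complex \<Rightarrow> (rat \<Rightarrow> complex) \<Rightarrow> real \<Rightarrow> complex" where
  "fstar_rat k f x =
     (if x \<in> \<rat> then
        (let y = (THE r. of_rat r = x) in (of_int (rden y) :: complex) powr (-k) * f (rat_bar y))
      else 0)"

definition fstar :: "complex \<Rightarrow> (rat \<Rightarrow> complex) \<Rightarrow> real \<Rightarrow> complex" where
  "fstar k f x = (if x \<in> \<rat> then fstar_rat k f x else Lim (at x within \<rat>) (fstar_rat k f))"

end

theory Submission
  imports Defs
begin

lemma quotient_of_coprime_div:
  assumes "q > 0" "coprime a q"
  shows "quotient_of (of_int a / of_int q) = (a, q)"
proof -
  have "of_int a / of_int q = Fract a q" by (simp add: Fract_of_int_quotient)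
  moreover have "quotient_of (Fract a q) = (a, q)"
    using assms by (simp add: quotient_of_Fract normalize_def)
  ultimately show ?thesis by simp
qed

lemma rnum_rden:
  assumes "q > 0" "coprime a q"
  shows "rnum (of_int a / of_int q) = a" "rden (of_int a / of_int q) = q"
  using quotient_of_coprime_div[OF assms] by (auto simp: rnum_def rden_def)

lemma inv_rep_cong:
  assumes "q > 0" "[a * b = 1] (mod q)"
  shows "0 < inv_rep a q \<and> inv_rep a q \<le> q \<and> [inv_rep a q = b] (mod q)"
proof -
  have cop: "coprime a q"
  proof -
    have "coprime (a*b) q" using cong_imp_coprime[OF cong_sym[OF assms(2)]] by (metis coprime_1_left)
    thus ?thesis by simp
  qed
  define b0 where "b0 = (b - 1) mod q + 1"
  have m1: "(b - 1) mod q < q" "0 \<le> (b - 1) mod q" using assms(1) by simp_all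
  have b0: "0 < b0" "b0 \<le> q" using m1 by (auto simp: b0_def)
  have "[b0 = b] (mod q)" unfolding b0_def
    by (metis cong_mod_left cong_refl diff_add_cancel cong_add)
  hence b0c: "[a * b0 = 1] (mod q)" using assms(2) by (metis cong_scalar_left cong_trans)
  have uniq: "c = b0" if "0 < c" "c \<le> q" "[a * c = 1] (mod q)" for c
  proof -
    have "[a * c = a * b0] (mod q)" using cong_trans[OF that(3) cong_sym[OF b0c]] .
    hence "[c = b0] (mod q)" using cong_mult_lcancel[OF cop] by simp
    hence "q dvd (c - b0)" by (simp add: cong_iff_dvd_diff)
    then obtain t where t: "c - b0 = q * t" by (auto simp: dvd_def)
    have "t = 0"
    proof (rule ccontr)
      assume "t \<noteq> 0"
      hence "t \<ge> 1 \<or> t \<le> -1" by linarith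
      thus False
      proof
        assume "t \<ge> 1"
        hence "q * t \<ge> q * 1" using assms(1) by (intro mult_left_mono) auto
        thus False using t that b0 by linarith
      next
        assume "t \<le> -1"
        hence "q * t \<le> q * (-1)" using assms(1) by (intro mult_left_mono) auto
        thus False using t that b0 by linarith
      qed
    qed
    thus ?thesis using t by simp
  qed
  have "inv_rep a q = b0" unfolding inv_rep_def
  proof (rule the_equality)
    show "0 < b0 \<and> b0 \<le> q \<and> [a * b0 = 1] (mod q)" using b0 b0c by simp
  next
    fix c assume "0 < c \<and> c \<le> q \<and> [a * c = 1] (mod q)"
    thus "c = b0" by (elim conjE) (rule uniq)
  qed
  thus ?thesis using b0 \<open>[b0 = b] (mod q)\<close> by simp
qed


definition gr :: "complex \<Rightarrow> (rat \<Rightarrow> complex) \<Rightarrow> rat \<Rightarrow> complex" where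
  "gr k f y = (of_int (rden y) :: complex) powr (-k) * f (rat_bar y)"

lemma fstar_rat_of_rat: "fstar_rat k f (of_rat y) = gr k f y"
proof -
  have "(THE r. (of_rat r :: real) = of_rat y) = y" by (rule the_equality) auto
  thus ?thesis by (simp add: fstar_rat_def gr_def Let_def)
qed

lemma cpowr_mult_pos:
  assumes "0 < x" "0 < y"
  shows "(complex_of_real (x * y)) powr z = complex_of_real x powr z * complex_of_real y powr z"
proof -
  have "complex_of_real (x * y) = complex_of_real x * complex_of_real y" by simp
  thus ?thesis using assms by (simp add: powr_times_real)
qed

lemma norm_cpowr_pos:
  assumes "0 \<le> x"
  shows "cmod ((complex_of_real x) powr z) = x powr Re z"
  using assms by (simp add: norm_powr_real_powr)

locale fsetup =
  fixes k :: complex and f :: "rat \<Rightarrow> complex" and h :: "real \<Rightarrow> complex" and C :: real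
  assumes k_pos: "Re k > 0"
    and f_per: "\<And>x. f (x + 1) = f x"
    and h_eq: "\<And>x::rat. x \<noteq> 0 \<Longrightarrow>
       h (of_rat x) = f x - (of_real \<bar>of_rat x\<bar> :: complex) powr (-k) * f (- 1 / x)"
    and hC: "\<forall>x::real. 0 < \<bar>x\<bar> \<and> \<bar>x\<bar> \<le> 1 \<longrightarrow> cmod (h x) \<le> C * \<bar>x\<bar> powr (- Re k)"
begin

lemma C_nonneg: "C \<ge> 0"
proof -
  have "cmod (h 1) \<le> C * \<bar>1::real\<bar> powr (- Re k)" using hC by auto
  hence "cmod (h 1) \<le> C" by simp
  thus ?thesis using norm_ge_zero[of "h 1"] by linarith
qed

lemma f_nat: "f (x + of_nat n) = f x"
proof (induction n)
  case 0 show ?case by simp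
next
  case (Suc n)
  have "f (x + of_nat (Suc n)) = f ((x + of_nat n) + 1)" by (simp add: ac_simps)
  also have "\<dots> = f (x + of_nat n)" by (rule f_per)
  finally show ?case using Suc by simp
qed

lemma f_int: "f (x + of_int n) = f x"
proof (cases "n \<ge> 0")
  case True
  then obtain m where "n = int m" by (metis nonneg_int_cases)
  thus ?thesis using f_nat by simp
next
  case False
  hence "-n \<ge> 0" by simp
  then obtain m where m: "-n = int m" by (metis nonneg_int_cases)
  have mm: "rat_of_nat m = - rat_of_int n" using m by (metis of_int_minus of_int_of_nat_eq)
  have "f x = f ((x + of_int n) + of_nat m)" by (simp add: mm)
  also have "\<dots> = f (x + of_int n)" by (rule f_nat)
  finally show ?thesis by simp
qed

lemma gr_eq:
  assumes "q > 0" "[a * b = 1] (mod q)"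
  shows "gr k f (of_int a / of_int q) = (of_int q :: complex) powr (-k) * f (of_int b / of_int q)"
proof -
  have cop: "coprime a q"
  proof -
    have "coprime (a*b) q" using cong_imp_coprime[OF cong_sym[OF assms(2)]] by (metis coprime_1_left)
    thus ?thesis by simp
  qed
  note rr = rnum_rden[OF assms(1) cop]
  have iv: "[inv_rep a q = b] (mod q)" using inv_rep_cong[OF assms] by simp
  hence "q dvd (inv_rep a q - b)" by (simp add: cong_iff_dvd_diff)
  then obtain t where t: "inv_rep a q - b = q * t" by (auto simp: dvd_def)
  hence t': "inv_rep a q = b + q * t" by simp
  have "rat_bar (of_int a / of_int q) = of_int (inv_rep a q) / of_int q"
    by (simp add: rat_bar_def rr)
  also have "\<dots> = of_int b / of_int q + of_int t" using assms(1) t' by (simp add: field_simps)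
  finally have "f (rat_bar (of_int a / of_int q)) = f (of_int b / of_int q)" by (simp add: f_int)
  thus ?thesis by (simp add: gr_def rr)
qed

end

context fsetup begin

lemma neighbor_id:
  assumes q: "q > 0" and r: "r > 0" and e: "e = 1 \<or> e = -1" and det: "a * r - p * q = e"
  shows "gr k f (of_int a / of_int q) - gr k f (of_int p / of_int r)
         = (of_int q :: complex) powr (-k) * h (of_rat (of_int e * of_int r / of_int q))"
proof -
  define x :: rat where "x = of_int e * of_int r / of_int q"
  have xne: "x \<noteq> 0" using q r e by (auto simp: x_def)
  have absx: "\<bar>of_rat x :: real\<bar> = real_of_int r / real_of_int q"
    using q r e by (auto simp: x_def of_rat_divide of_rat_mult)
  define P where "P = (complex_of_real (real_of_int r / real_of_int q)) powr (-k)"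
  define Q where "Q = (of_int q :: complex) powr (-k)"
  define R where "R = (of_int r :: complex) powr (-k)"
  have pw: "Q * P = R"
  proof -
    have "complex_of_real (real_of_int q * (real_of_int r / real_of_int q)) powr (-k)
       = complex_of_real (real_of_int q) powr (-k) * complex_of_real (real_of_int r / real_of_int q) powr (-k)"
      using q r by (intro cpowr_mult_pos) auto
    moreover have "real_of_int q * (real_of_int r / real_of_int q) = real_of_int r" using q by simp
    ultimately show ?thesis unfolding P_def Q_def R_def by simp
  qed
  have H: "h (of_rat x) = f x - P * f (- 1 / x)"
    using h_eq[OF xne] unfolding absx P_def .
  have "gr k f (of_int a / of_int q) - gr k f (of_int p / of_int r) = Q * h (of_rat x)"
  proof (cases "e = 1")
    case True
    have d1: "a * r - 1 = q * p" using det True by (simp add: algebra_simps)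
    have c1: "[a * r = 1] (mod q)" unfolding cong_iff_dvd_diff using d1 by simp
    have d2: "p * (- q) - 1 = r * (- a)" using det True by (simp add: algebra_simps)
    have c2: "[p * (- q) = 1] (mod r)" unfolding cong_iff_dvd_diff using d2 by (metis dvd_triv_left)
    have g1: "gr k f (of_int a / of_int q) = Q * f (of_int r / of_int q)"
      unfolding Q_def by (rule gr_eq[OF q c1])
    have g2: "gr k f (of_int p / of_int r) = R * f (of_int (-q) / of_int r)"
      unfolding R_def by (rule gr_eq[OF r c2])
    have xv: "x = of_int r / of_int q" using True by (simp add: x_def)
    have m1: "- 1 / x = of_int (-q) / of_int r" using q r by (simp add: xv field_simps)
    have "gr k f (of_int a / of_int q) - gr k f (of_int p / of_int r) = Q * f (of_int r / of_int q) - (Q * P) * f (of_int (-q) / of_int r)"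
      unfolding g1 g2 pw ..
    also have "\<dots> = Q * (f x - P * f (- 1 / x))" unfolding m1 xv by (simp add: algebra_simps)
    finally show ?thesis unfolding H .
  next
    case False
    hence e1: "e = -1" using e by simp
    have d1: "a * (-r) - 1 = q * (-p)" using det e1 by (simp add: algebra_simps)
    have c1: "[a * (-r) = 1] (mod q)" unfolding cong_iff_dvd_diff using d1 by (metis dvd_triv_left)
    have d2: "p * q - 1 = r * a" using det e1 by (simp add: algebra_simps)
    have c2: "[p * q = 1] (mod r)" unfolding cong_iff_dvd_diff using d2 by (metis dvd_triv_left)
    have g1: "gr k f (of_int a / of_int q) = Q * f (of_int (-r) / of_int q)"
      unfolding Q_def by (rule gr_eq[OF q c1])
    have g2: "gr k f (of_int p / of_int r) = R * f (of_int q / of_int r)"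
      unfolding R_def by (rule gr_eq[OF r c2])
    have xv: "x = of_int (-r) / of_int q" using e1 by (simp add: x_def)
    have m1: "- 1 / x = of_int q / of_int r" using q r by (simp add: xv field_simps)
    have "gr k f (of_int a / of_int q) - gr k f (of_int p / of_int r) = Q * f (of_int (-r) / of_int q) - (Q * P) * f (of_int q / of_int r)"
      unfolding g1 g2 pw ..
    also have "\<dots> = Q * (f x - P * f (- 1 / x))" unfolding m1 xv by (simp add: algebra_simps)
    finally show ?thesis unfolding H .
  qed
  thus ?thesis unfolding Q_def x_def .
qed

lemma neighbor_gen:
  assumes q: "q > 0" and r: "r > 0" and rq: "r \<le> q" and det: "\<bar>a * r - p * q\<bar> = 1"
    and hb: "\<And>x::real. x \<noteq> 0 \<Longrightarrow> \<bar>x\<bar> = real_of_int r / real_of_int q \<Longrightarrow> cmod (h x) \<le> B * \<bar>x\<bar> powr (- Re k)"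
  shows "cmod (gr k f (of_int a / of_int q) - gr k f (of_int p / of_int r)) \<le> B * real_of_int r powr (- Re k)"
proof -
  define e where "e = a * r - p * q"
  have e: "e = 1 \<or> e = -1" using det by (auto simp: e_def abs_if split: if_splits)
  define x :: real where "x = of_rat (of_int e * of_int r / of_int q)"
  have xv: "x = real_of_int e * real_of_int r / real_of_int q"
    by (simp add: x_def of_rat_divide of_rat_mult)
  have ax: "\<bar>x\<bar> = real_of_int r / real_of_int q" using e q r by (auto simp: xv)
  have xne: "x \<noteq> 0" using ax q r by auto
  have eq: "gr k f (of_int a / of_int q) - gr k f (of_int p / of_int r) = (of_int q :: complex) powr (-k) * h x"
    unfolding x_def by (rule neighbor_id[OF q r e]) (simp add: e_def)
  have nq: "cmod ((of_int q :: complex) powr (-k)) = real_of_int q powr (- Re k)"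
  proof -
    have "(of_int q :: complex) = complex_of_real (real_of_int q)" by simp
    hence "cmod ((of_int q :: complex) powr (-k)) = cmod (complex_of_real (real_of_int q) powr (-k))" by simp
    also have "\<dots> = real_of_int q powr (- Re k)" using q by (subst norm_cpowr_pos) auto
    finally show ?thesis .
  qed
  have "cmod (gr k f (of_int a / of_int q) - gr k f (of_int p / of_int r)) = real_of_int q powr (- Re k) * cmod (h x)"
    unfolding eq norm_mult nq ..
  also have "\<dots> \<le> real_of_int q powr (- Re k) * (B * \<bar>x\<bar> powr (- Re k))"
    by (intro mult_left_mono hb[OF xne ax]) auto
  also have "\<dots> = B * (real_of_int q powr (- Re k) * (real_of_int r / real_of_int q) powr (- Re k))"
    unfolding ax by simp
  also have "real_of_int q powr (- Re k) * (real_of_int r / real_of_int q) powr (- Re k) = real_of_int r powr (- Re k)"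
    using q r by (simp add: powr_divide)
  finally show ?thesis .
qed

lemma neighbor_bound:
  assumes q: "q > 0" and r: "r > 0" and rq: "r \<le> q" and det: "\<bar>a * r - p * q\<bar> = 1"
  shows "cmod (gr k f (of_int a / of_int q) - gr k f (of_int p / of_int r)) \<le> C * real_of_int r powr (- Re k)"
proof (rule neighbor_gen[OF q r rq det])
  fix x :: real assume "x \<noteq> 0" "\<bar>x\<bar> = real_of_int r / real_of_int q"
  moreover have "real_of_int r / real_of_int q \<le> 1" using rq q by simp
  ultimately show "cmod (h x) \<le> C * \<bar>x\<bar> powr (- Re k)" using hC by auto
qed

end

lemma powr_anti:
  fixes a b s :: real
  assumes "0 < a" "a \<le> b" "0 \<le> s"
  shows "b powr (- s) \<le> a powr (- s)"
  by (rule powr_mono2') (use assms in auto)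

context fsetup begin

definition G :: "int \<Rightarrow> int \<Rightarrow> complex" where "G a q = gr k f (of_int a / of_int q)"

definition K :: real where "K = C / (1 - 2 powr (- Re k))"

lemma two_powr: "0 < 2 powr (- Re k)" "2 powr (- Re k) < (1::real)"
proof -
  show "0 < 2 powr (- Re k)" by simp
  show "2 powr (- Re k) < (1::real)" by (rule powr_less_one) (use k_pos in auto)
qed

lemma K_props: "K \<ge> 0" "K \<ge> C" "K * (1 - 2 powr (- Re k)) = C" "K * 2 powr (- Re k) + C = K"
proof -
  have d: "0 < 1 - 2 powr (- Re k)" "1 - 2 powr (- Re k) \<le> 1" using two_powr by auto
  show "K \<ge> 0" unfolding K_def by (rule divide_nonneg_pos) (use C_nonneg d in auto)
  have nz: "1 - 2 powr (- Re k) \<noteq> 0" using d(1) by linarith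
  show "K * (1 - 2 powr (- Re k)) = C" unfolding K_def using nz by simp
  thus "K * 2 powr (- Re k) + C = K" by (simp add: algebra_simps)
  have "C / (1 - 2 powr (- Re k)) \<ge> C / 1" using C_nonneg d by (intro divide_left_mono) auto
  thus "K \<ge> C" unfolding K_def by simp
qed

lemma G_scale: "c \<noteq> 0 \<Longrightarrow> G (c * a) (c * q) = G a q"
  unfolding G_def by simp

lemma G_neighbor:
  assumes "0 < r" "r \<le> q" "\<bar>a * r - p * q\<bar> = 1"
  shows "cmod (G a q - G p r) \<le> C * real_of_int r powr (- Re k)"
  unfolding G_def using assms by (intro neighbor_bound) auto

lemma main_bound:
  assumes "m \<ge> 0" "n \<ge> 0" "m + n > 0" "1 \<le> q1" "q1 \<le> q2" "\<bar>p1 * q2 - p2 * q1\<bar> = 1"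
  shows "cmod (G (m * p1 + n * p2) (m * q1 + n * q2) - G p1 q1)
           \<le> K * (real_of_int q1 powr (- Re k) + real_of_int q2 powr (- Re k))"
  using assms
proof (induction "nat (m + n)" arbitrary: m n p1 q1 p2 q2 rule: less_induct)
  case less
  define s where "s = Re k"
  have s: "s > 0" using k_pos by (simp add: s_def)
  have Kp: "K \<ge> 0" "K \<ge> C" "K * 2 powr (- s) + C = K" using K_props by (auto simp: s_def)
  have q1p: "real_of_int q1 powr (- s) \<ge> 0" "real_of_int q2 powr (- s) \<ge> 0" by auto
  show ?case
  proof (cases "n = 0")
    case True
    hence "m > 0" using less by simp
    hence "G (m * p1 + n * p2) (m * q1 + n * q2) = G p1 q1" using True G_scale[of m] by simp
    thus ?thesis using Kp q1p by (simp add: s_def)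
  next
    case n0: False
    show ?thesis
    proof (cases "m = 0")
      case True
      hence "G (m * p1 + n * p2) (m * q1 + n * q2) = G p2 q2" using n0 G_scale[of n] by simp
      moreover have "cmod (G p2 q2 - G p1 q1) \<le> C * real_of_int q1 powr (- s)"
        unfolding s_def using less.prems by (intro G_neighbor) (auto simp: abs_minus_commute algebra_simps)
      moreover have "C * real_of_int q1 powr (- s) \<le> K * real_of_int q1 powr (- s)"
        using Kp q1p by (intro mult_right_mono) auto
      moreover have "0 \<le> K * real_of_int q2 powr (- s)" using Kp q1p by simp
      ultimately show ?thesis unfolding s_def by (simp add: algebra_simps)
    next
      case m0: False
      have mp: "m > 0" "n > 0" using m0 n0 less.prems by auto
      define i where "i = m div n"
      define m' where "m' = m mod n"
      define n' where "n' = n - m mod n"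
      have i0: "i \<ge> 0" using mp by (simp add: i_def pos_imp_zdiv_nonneg_iff)
      have m'b: "0 \<le> m'" "m' < n" using mp by (auto simp: m'_def)
      have n'p: "n' > 0" using m'b by (simp add: n'_def m'_def)
      have mdec: "m = n * i + m'" by (simp add: i_def m'_def)
      define a1 where "a1 = i * p1 + p2"
      define b1 where "b1 = i * q1 + q2"
      define a2 where "a2 = (i + 1) * p1 + p2"
      define b2 where "b2 = (i + 1) * q1 + q2"
      have nm: "n' + m' = n" by (simp add: n'_def m'_def)
      have "n' * a1 + m' * a2 = (n' + m') * a1 + m' * p1" by (simp add: a1_def a2_def algebra_simps)
      also have "\<dots> = m * p1 + n * p2" unfolding nm mdec by (simp add: a1_def algebra_simps)
      finally have eqa: "m * p1 + n * p2 = n' * a1 + m' * a2" by simp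
      have "n' * b1 + m' * b2 = (n' + m') * b1 + m' * q1" by (simp add: b1_def b2_def algebra_simps)
      also have "\<dots> = m * q1 + n * q2" unfolding nm mdec by (simp add: b1_def algebra_simps)
      finally have eqb: "m * q1 + n * q2 = n' * b1 + m' * b2" by simp
      have b1ge: "b1 \<ge> q2" using i0 less.prems by (simp add: b1_def)
      have b2ge: "b2 \<ge> q1 + q2" using i0 less.prems by (simp add: b2_def algebra_simps)
      have b12: "b1 \<le> b2" using less.prems by (simp add: b1_def b2_def algebra_simps)
      have det': "\<bar>a1 * b2 - a2 * b1\<bar> = 1"
      proof -
        have "a1 * b2 - a2 * b1 = -(p1 * q2 - p2 * q1)"
          by (simp add: a1_def a2_def b1_def b2_def algebra_simps)
        thus ?thesis using less.prems by simp
      qed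
      have lt: "nat (n' + m') < nat (m + n)" using mp m'b by (simp add: n'_def m'_def)
      have IH: "cmod (G (n' * a1 + m' * a2) (n' * b1 + m' * b2) - G a1 b1)
           \<le> K * (real_of_int b1 powr (- s) + real_of_int b2 powr (- s))"
        unfolding s_def
        by (rule less.hyps[OF lt]) (use n'p m'b b1ge b12 det' less.prems in auto)
      have NB: "cmod (G a1 b1 - G p1 q1) \<le> C * real_of_int q1 powr (- s)"
        unfolding s_def
      proof (rule G_neighbor)
        show "0 < q1" using less.prems by simp
        show "q1 \<le> b1" using b1ge less.prems by simp
        have "a1 * q1 - p1 * b1 = p2 * q1 - p1 * q2" by (simp add: a1_def b1_def algebra_simps)
        thus "\<bar>a1 * q1 - p1 * b1\<bar> = 1" using less.prems by (simp add: abs_minus_commute)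
      qed
      have e1: "real_of_int b1 powr (- s) \<le> real_of_int q2 powr (- s)"
        using b1ge less.prems s by (intro powr_anti) auto
      have "real_of_int b2 powr (- s) \<le> (2 * real_of_int q1) powr (- s)"
        using b2ge less.prems s by (intro powr_anti) auto
      also have "\<dots> = 2 powr (- s) * real_of_int q1 powr (- s)"
        using less.prems by (simp add: powr_mult)
      finally have e2: "real_of_int b2 powr (- s) \<le> 2 powr (- s) * real_of_int q1 powr (- s)" .
      have "cmod (G (m * p1 + n * p2) (m * q1 + n * q2) - G p1 q1)
          \<le> cmod (G (n' * a1 + m' * a2) (n' * b1 + m' * b2) - G a1 b1) + cmod (G a1 b1 - G p1 q1)"
        unfolding eqa eqb using norm_triangle_ineq[of "G (n' * a1 + m' * a2) (n' * b1 + m' * b2) - G a1 b1" "G a1 b1 - G p1 q1"] by simp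
      also have "\<dots> \<le> K * (real_of_int b1 powr (- s) + real_of_int b2 powr (- s)) + C * real_of_int q1 powr (- s)"
        using IH NB by simp
      also have "\<dots> \<le> K * (real_of_int q2 powr (- s) + 2 powr (- s) * real_of_int q1 powr (- s)) + C * real_of_int q1 powr (- s)"
        using e1 e2 Kp by (intro add_right_mono mult_left_mono) auto
      also have "\<dots> = K * real_of_int q2 powr (- s) + (K * 2 powr (- s) + C) * real_of_int q1 powr (- s)"
        by (simp add: algebra_simps)
      also have "\<dots> = K * (real_of_int q1 powr (- s) + real_of_int q2 powr (- s))"
        using Kp by (simp add: algebra_simps)
      finally show ?thesis by (simp add: s_def)
    qed
  qed
qed

end

definition fpair :: "int \<Rightarrow> int \<Rightarrow> int \<Rightarrow> int \<Rightarrow> bool" where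
  "fpair p1 q1 p2 q2 \<longleftrightarrow> 1 \<le> q1 \<and> q1 \<le> q2 \<and> \<bar>p1 * q2 - p2 * q1\<bar> = 1"

definition btw :: "int \<Rightarrow> int \<Rightarrow> int \<Rightarrow> int \<Rightarrow> real \<Rightarrow> bool" where
  "btw p1 q1 p2 q2 z \<longleftrightarrow> (z * q1 - p1) * (p2 - z * q2) > 0"

definition cbtw :: "int \<Rightarrow> int \<Rightarrow> int \<Rightarrow> int \<Rightarrow> real \<Rightarrow> bool" where
  "cbtw p1 q1 p2 q2 z \<longleftrightarrow> (z * q1 - p1) * (p2 - z * q2) \<ge> 0"

lemma btw_cbtw: "btw p1 q1 p2 q2 z \<Longrightarrow> cbtw p1 q1 p2 q2 z"
  by (simp add: btw_def cbtw_def)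

lemma open_btw: "open {z. btw p1 q1 p2 q2 z}"
  unfolding btw_def by (rule open_Collect_less) (intro continuous_intros)+

lemma child_pair:
  assumes "fpair p1 q1 p2 q2" "i \<ge> 0"
  shows "fpair (i * p1 + p2) (i * q1 + q2) ((i + 1) * p1 + p2) ((i + 1) * q1 + q2)"
    "i * q1 + q2 \<ge> q2" "(i + 1) * q1 + q2 \<ge> q1 + q2"
proof -
  have a: "1 \<le> q1" "q1 \<le> q2" "\<bar>p1 * q2 - p2 * q1\<bar> = 1" using assms(1) by (auto simp: fpair_def)
  have "(i * p1 + p2) * ((i + 1) * q1 + q2) - ((i + 1) * p1 + p2) * (i * q1 + q2) = -(p1 * q2 - p2 * q1)"
    by (simp add: algebra_simps)
  hence d: "\<bar>(i * p1 + p2) * ((i + 1) * q1 + q2) - ((i + 1) * p1 + p2) * (i * q1 + q2)\<bar> = 1"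
    using a by simp
  have "i * q1 \<ge> 0" using a assms(2) by simp
  thus "i * q1 + q2 \<ge> q2" by simp
  show "(i + 1) * q1 + q2 \<ge> q1 + q2" using a assms(2) by (simp add: algebra_simps)
  show "fpair (i * p1 + p2) (i * q1 + q2) ((i + 1) * p1 + p2) ((i + 1) * q1 + q2)"
    unfolding fpair_def using d a \<open>i * q1 \<ge> 0\<close> by (simp add: algebra_simps)
qed

lemma Rats_limpt: "(x::real) islimpt \<rat>"
proof (unfold islimpt_approachable_real, intro allI impI)
  fix e :: real assume "e > 0"
  then obtain r where "r \<in> \<rat>" "x < r" "r < x + e" using Rats_dense_in_real[of x "x + e"] by auto
  thus "\<exists>x'\<in>\<rat>. x' \<noteq> x \<and> \<bar>x' - x\<bar> < e" by (intro bexI[of _ r]) auto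
qed

lemma at_Rats_nontriv: "\<not> trivial_limit (at (x::real) within \<rat>)"
  using Rats_limpt trivial_limit_within by blast

lemma step_pair:
  assumes fp: "fpair p1 q1 p2 q2" and x: "x \<notin> \<rat>" and b: "btw p1 q1 p2 q2 x"
  shows "\<exists>i\<ge>0. btw (i * p1 + p2) (i * q1 + q2) ((i + 1) * p1 + p2) ((i + 1) * q1 + q2) x"
proof -
  have a: "1 \<le> q1" "q1 \<le> q2" using fp by (auto simp: fpair_def)
  define A where "A = x * q1 - p1"
  define B where "B = p2 - x * q2"
  have AB: "A * B > 0" using b by (simp add: btw_def A_def B_def)
  hence A0: "A \<noteq> 0" by auto
  define t where "t = B / A"
  have t0: "t > 0" using AB unfolding t_def zero_less_divide_iff zero_less_mult_iff by blast
  define i where "i = \<lfloor>t\<rfloor>"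
  have i0: "i \<ge> 0" using t0 by (simp add: i_def)
  have tne: "t \<noteq> of_int i"
  proof
    assume ti: "t = of_int i"
    hence "B = of_int i * A" using A0 by (simp add: t_def field_simps)
    hence "x * (of_int i * q1 + q2) = of_int i * p1 + p2" by (simp add: A_def B_def algebra_simps)
    moreover have "(of_int i * q1 + q2 :: real) > 0" using i0 a by (simp add: add_nonneg_pos)
    ultimately have "x = (of_int i * p1 + p2) / (of_int i * q1 + q2)" by (simp add: field_simps)
    hence "x \<in> \<rat>" by simp
    thus False using x by simp
  qed
  have fc: "of_int i \<le> t \<and> t < of_int i + 1" using floor_correct[of t] by (simp add: i_def)
  have ti: "of_int i < t" "t < of_int i + 1" using fc tne by auto
  have e1: "x * real_of_int (i * q1 + q2) - real_of_int (i * p1 + p2) = of_int i * A - B"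
    by (simp add: A_def B_def algebra_simps)
  have e2: "real_of_int ((i + 1) * p1 + p2) - x * real_of_int ((i + 1) * q1 + q2) = B - (of_int i + 1) * A"
    by (simp add: A_def B_def algebra_simps)
  have Bt: "B = t * A" using A0 by (simp add: t_def)
  have "(of_int i * A - B) * (B - (of_int i + 1) * A) = (A * A) * ((t - of_int i) * (of_int i + 1 - t))"
    unfolding Bt by algebra
  hence "(x * real_of_int (i * q1 + q2) - real_of_int (i * p1 + p2)) * (real_of_int ((i + 1) * p1 + p2) - x * real_of_int ((i + 1) * q1 + q2))
        = (A * A) * ((t - of_int i) * (of_int i + 1 - t))"
    unfolding e1 e2 .
  moreover have "(A * A) * ((t - of_int i) * (of_int i + 1 - t)) > 0"
  proof -
    have "A * A > 0" using A0 by (metis not_real_square_gt_zero)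
    moreover have "(t - of_int i) * (of_int i + 1 - t) > 0" using ti by (intro mult_pos_pos) auto
    ultimately show ?thesis by (rule mult_pos_pos)
  qed
  ultimately show ?thesis using i0 unfolding btw_def by (intro exI[of _ i]) simp
qed

lemma exist_pair:
  assumes x: "x \<notin> \<rat>"
  shows "\<exists>p1 q1 p2 q2. fpair p1 q1 p2 q2 \<and> btw p1 q1 p2 q2 x \<and> int N \<le> q1"
proof (induction N)
  case 0
  define a where "a = \<lfloor>x\<rfloor>"
  have "x \<noteq> of_int a" using x by auto
  moreover have "of_int a \<le> x \<and> x < of_int a + 1" using floor_correct[of x] by (simp add: a_def)
  ultimately have "of_int a < x" "x < of_int a + 1" by auto
  hence "btw a 1 (a + 1) 1 x" by (simp add: btw_def)
  moreover have "fpair a 1 (a + 1) 1" by (simp add: fpair_def)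
  ultimately show ?case by force
next
  case (Suc N)
  then obtain p1 q1 p2 q2 where fp: "fpair p1 q1 p2 q2" and b: "btw p1 q1 p2 q2 x" and N: "int N \<le> q1" by blast
  obtain i where i: "i \<ge> 0" and b1: "btw (i * p1 + p2) (i * q1 + q2) ((i + 1) * p1 + p2) ((i + 1) * q1 + q2) x"
    using step_pair[OF fp x b] by blast
  define a1 b1 a2 b2 where "a1 = i * p1 + p2" "b1 = i * q1 + q2" "a2 = (i + 1) * p1 + p2" "b2 = (i + 1) * q1 + q2"
  note cp = child_pair[OF fp i]
  have fp1: "fpair a1 b1 a2 b2" and bb1: "btw a1 b1 a2 b2 x" using cp b1 by (simp_all add: a1_b1_a2_b2_def)
  have "b2 \<ge> q1 + q2" using cp(3) by (simp add: a1_b1_a2_b2_def)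
  hence g1: "b2 \<ge> int N + 1" using fp N by (simp add: fpair_def)
  obtain j where j: "j \<ge> 0" and b2: "btw (j * a1 + a2) (j * b1 + b2) ((j + 1) * a1 + a2) ((j + 1) * b1 + b2) x"
    using step_pair[OF fp1 x bb1] by blast
  note cp2 = child_pair[OF fp1 j]
  show ?case
    by (rule exI[of _ "j * a1 + a2"], rule exI[of _ "j * b1 + b2"], rule exI[of _ "(j + 1) * a1 + a2"],
        rule exI[of _ "(j + 1) * b1 + b2"]) (use cp2 b2 g1 in auto)
qed

context fsetup begin

lemma rat_cbtw_bound:
  assumes fp: "fpair p1 q1 p2 q2" and yq: "y \<in> \<rat>" and cb: "cbtw p1 q1 p2 q2 y"
  shows "cmod (fstar_rat k f y - G p1 q1) \<le> K * (real_of_int q1 powr (- Re k) + real_of_int q2 powr (- Re k))"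
proof -
  obtain r where ry: "y = of_rat r" using yq Rats_cases by blast
  obtain a q where aq: "quotient_of r = (a, q)" by (cases "quotient_of r") auto
  have q0: "q > 0" using quotient_of_denom_pos[OF aq] .
  have rv: "r = of_int a / of_int q" using quotient_of_div[OF aq] .
  have yv: "y = real_of_int a / real_of_int q" using ry rv by (simp add: of_rat_divide)
  have fs: "fstar_rat k f y = G a q" unfolding ry fstar_rat_of_rat G_def rv ..
  have a: "1 \<le> q1" "q1 \<le> q2" "\<bar>p1 * q2 - p2 * q1\<bar> = 1" using fp by (auto simp: fpair_def)
  define u where "u = a * q1 - p1 * q"
  define v where "v = p2 * q - a * q2"
  have uv: "real_of_int u * real_of_int v \<ge> 0"
  proof -
    have "(y * q1 - p1) = real_of_int u / real_of_int q" using q0 by (simp add: yv u_def field_simps)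
    moreover have "(p2 - y * q2) = real_of_int v / real_of_int q" using q0 by (simp add: yv v_def field_simps)
    ultimately have "(real_of_int u / real_of_int q) * (real_of_int v / real_of_int q) \<ge> 0"
      using cb by (simp add: cbtw_def)
    hence "(real_of_int u * real_of_int v) / (real_of_int q * real_of_int q) \<ge> 0" by simp
    moreover have "real_of_int q * real_of_int q > 0" using q0 by simp
    ultimately show ?thesis by (simp add: zero_le_divide_iff)
  qed
  hence uv': "u * v \<ge> 0" by (metis of_int_0_le_iff of_int_mult)
  define e where "e = p2 * q1 - p1 * q2"
  have "\<bar>e\<bar> = 1" using a(3) by (simp add: e_def abs_minus_commute)
  hence ee: "e * e = 1" by (metis abs_mult_self_eq mult_1)
  define m where "m = e * v"
  define n where "n = e * u"
  have ma: "m * p1 + n * p2 = a"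
  proof -
    have "m * p1 + n * p2 = e * (a * e)" by (simp add: m_def n_def u_def v_def e_def algebra_simps)
    thus ?thesis using ee by (simp add: algebra_simps)
  qed
  have mq: "m * q1 + n * q2 = q"
  proof -
    have "m * q1 + n * q2 = e * (q * e)" by (simp add: m_def n_def u_def v_def e_def algebra_simps)
    thus ?thesis using ee by (simp add: algebra_simps)
  qed
  have "m * n = (e * e) * (u * v)" by (simp add: m_def n_def algebra_simps)
  hence mn: "m * n \<ge> 0" using uv' ee by simp
  have m0: "m \<ge> 0"
  proof (rule ccontr)
    assume "\<not> m \<ge> 0"
    hence "m < 0" by simp
    have "n \<le> 0"
    proof (rule ccontr)
      assume "\<not> n \<le> 0" hence "m * n < 0" using \<open>m < 0\<close> by (simp add: mult_neg_pos)
      thus False using mn by simp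
    qed
    have "m * q1 < 0" using \<open>m < 0\<close> a by (simp add: mult_neg_pos)
    moreover have "n * q2 \<le> 0" using \<open>n \<le> 0\<close> a by (simp add: mult_nonpos_nonneg)
    ultimately have "m * q1 + n * q2 < 0" by simp
    thus False using mq q0 by simp
  qed
  have n0: "n \<ge> 0"
  proof (rule ccontr)
    assume "\<not> n \<ge> 0"
    hence "n < 0" by simp
    have "m \<le> 0"
    proof (rule ccontr)
      assume "\<not> m \<le> 0" hence "m * n < 0" using \<open>n < 0\<close> by (simp add: mult_pos_neg)
      thus False using mn by simp
    qed
    have "n * q2 < 0" using \<open>n < 0\<close> a by (simp add: mult_neg_pos)
    moreover have "m * q1 \<le> 0" using \<open>m \<le> 0\<close> a by (simp add: mult_nonpos_nonneg)
    ultimately have "m * q1 + n * q2 < 0" by simp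
    thus False using mq q0 by simp
  qed
  have mn0: "m + n > 0"
  proof (rule ccontr)
    assume "\<not> m + n > 0"
    hence "m = 0" "n = 0" using m0 n0 by auto
    thus False using mq q0 by simp
  qed
  have "cmod (G (m * p1 + n * p2) (m * q1 + n * q2) - G p1 q1)
           \<le> K * (real_of_int q1 powr (- Re k) + real_of_int q2 powr (- Re k))"
    by (rule main_bound) (use m0 n0 mn0 a in auto)
  thus ?thesis unfolding fs ma mq .
qed

end

context fsetup begin

lemma small_pair:
  assumes x: "x \<notin> \<rat>" and e: "e > 0"
  shows "\<exists>p1 q1 p2 q2. fpair p1 q1 p2 q2 \<and> btw p1 q1 p2 q2 x \<and> int N0 \<le> q1 \<and>
           K * (real_of_int q1 powr (- Re k) + real_of_int q2 powr (- Re k)) < e"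
proof -
  define s where "s = Re k"
  have s: "s > 0" using k_pos by (simp add: s_def)
  have Kp: "K \<ge> 0" using K_props by simp
  have "((\<lambda>N. real N powr (- s)) \<longlongrightarrow> 0) sequentially"
    using s by (intro tendsto_neg_powr filterlim_real_sequentially) auto
  moreover have "e / (2 * K + 1) > 0" using e Kp by simp
  ultimately have "eventually (\<lambda>N. real N powr (- s) < e / (2 * K + 1)) sequentially"
    by (rule order_tendstoD(2))
  then obtain N1 where N1: "\<And>N. N \<ge> N1 \<Longrightarrow> real N powr (- s) < e / (2 * K + 1)"
    unfolding eventually_sequentially by blast
  define N where "N = max N1 (max N0 1)"
  have NN: "real N powr (- s) < e / (2 * K + 1)" "N \<ge> 1" "N \<ge> N0" using N1[of N] by (auto simp: N_def)
  obtain p1 q1 p2 q2 where fp: "fpair p1 q1 p2 q2" and b: "btw p1 q1 p2 q2 x" and Nq: "int N \<le> q1"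
    using exist_pair[OF x, of N] by blast
  have a: "1 \<le> q1" "q1 \<le> q2" using fp by (auto simp: fpair_def)
  have b1: "real_of_int q1 powr (- s) \<le> real N powr (- s)"
    using Nq NN s by (intro powr_anti) auto
  have b2: "real_of_int q2 powr (- s) \<le> real N powr (- s)"
    using Nq NN a s by (intro powr_anti) auto
  have "K * (real_of_int q1 powr (- s) + real_of_int q2 powr (- s)) \<le> K * (2 * real N powr (- s))"
    using b1 b2 Kp by (intro mult_left_mono) auto
  also have "\<dots> \<le> (2 * K + 1) * real N powr (- s)" using Kp by (simp add: algebra_simps)
  also have "\<dots> < (2 * K + 1) * (e / (2 * K + 1))" using NN Kp by (intro mult_strict_left_mono) auto
  also have "\<dots> = e" using Kp by simp
  finally show ?thesis using fp b Nq NN unfolding s_def by (intro exI[of _ p1] exI[of _ q1] exI[of _ p2] exI[of _ q2]) auto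
qed

lemma eventually_btw:
  assumes "btw p1 q1 p2 q2 x"
  shows "eventually (\<lambda>y. y \<in> \<rat> \<and> btw p1 q1 p2 q2 y) (at x within \<rat>)"
  unfolding eventually_at_topological
proof (rule exI[of _ "{z. btw p1 q1 p2 q2 z}"], intro conjI)
  show "open {z. btw p1 q1 p2 q2 z}" by (rule open_btw)
  show "x \<in> {z. btw p1 q1 p2 q2 z}" using assms by simp
  show "\<forall>y\<in>{z. btw p1 q1 p2 q2 z}. y \<noteq> x \<longrightarrow> y \<in> \<rat> \<longrightarrow> y \<in> \<rat> \<and> btw p1 q1 p2 q2 y" by simp
qed

lemma lim_exists:
  assumes x: "x \<notin> \<rat>"
  shows "\<exists>L. (fstar_rat k f \<longlongrightarrow> L) (at x within \<rat>)"
proof -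
  let ?F = "at x within \<rat>"
  let ?g = "fstar_rat k f"
  have cf: "cauchy_filter (filtermap ?g ?F)"
    unfolding cauchy_filter_metric_filtermap
  proof (intro allI impI)
    fix e :: real assume e: "e > 0"
    then obtain p1 q1 p2 q2 where fp: "fpair p1 q1 p2 q2" and b: "btw p1 q1 p2 q2 x"
      and B: "K * (real_of_int q1 powr (- Re k) + real_of_int q2 powr (- Re k)) < e / 2"
      using small_pair[OF x, of "e / 2" 0] by auto
    show "\<exists>P. eventually P ?F \<and> (\<forall>y z. P y \<and> P z \<longrightarrow> dist (?g y) (?g z) < e)"
    proof (intro exI[of _ "\<lambda>y. y \<in> \<rat> \<and> btw p1 q1 p2 q2 y"] conjI allI impI)
      show "eventually (\<lambda>y. y \<in> \<rat> \<and> btw p1 q1 p2 q2 y) ?F" by (rule eventually_btw[OF b])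
      fix y z assume yz: "(y \<in> \<rat> \<and> btw p1 q1 p2 q2 y) \<and> (z \<in> \<rat> \<and> btw p1 q1 p2 q2 z)"
      have "cmod (?g y - G p1 q1) \<le> K * (real_of_int q1 powr (- Re k) + real_of_int q2 powr (- Re k))"
        using yz btw_cbtw by (intro rat_cbtw_bound[OF fp]) simp_all
      moreover have "cmod (?g z - G p1 q1) \<le> K * (real_of_int q1 powr (- Re k) + real_of_int q2 powr (- Re k))"
        using yz btw_cbtw by (intro rat_cbtw_bound[OF fp]) simp_all
      moreover have "dist (?g y) (?g z) \<le> cmod (?g y - G p1 q1) + cmod (?g z - G p1 q1)"
        unfolding dist_norm using norm_triangle_ineq4[of "?g y - G p1 q1" "?g z - G p1 q1"] by simp
      ultimately show "dist (?g y) (?g z) < e" using B by linarith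
    qed
  qed
  have nb: "filtermap ?g ?F \<noteq> bot"
    using at_Rats_nontriv[of x] by (simp add: filtermap_bot_iff)
  have pr: "filtermap ?g ?F \<le> principal UNIV" by simp
  obtain c where "filtermap ?g ?F \<le> nhds c"
    using cauchy_filter_complete_converges[OF cf complete_UNIV pr nb] by (elim exE)
  thus ?thesis unfolding filterlim_def by blast
qed

lemma fstar_tendsto:
  assumes x: "x \<notin> \<rat>"
  shows "(fstar_rat k f \<longlongrightarrow> fstar k f x) (at x within \<rat>)"
proof -
  obtain L where L: "(fstar_rat k f \<longlongrightarrow> L) (at x within \<rat>)" using lim_exists[OF x] by blast
  have "fstar k f x = Lim (at x within \<rat>) (fstar_rat k f)" using x by (simp add: fstar_def)
  also have "\<dots> = L" by (rule tendsto_Lim[OF at_Rats_nontriv L])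
  finally show ?thesis using L by simp
qed

lemma irr_bound:
  assumes x: "x \<notin> \<rat>" and U: "open U" "x \<in> U"
    and bd: "\<And>y. y \<in> U \<Longrightarrow> y \<in> \<rat> \<Longrightarrow> cmod (fstar_rat k f y - c) \<le> B"
  shows "cmod (fstar k f x - c) \<le> B"
proof (rule Lim_norm_ubound[OF at_Rats_nontriv])
  show "((\<lambda>y. fstar_rat k f y - c) \<longlongrightarrow> fstar k f x - c) (at x within \<rat>)"
    by (intro tendsto_intros fstar_tendsto[OF x])
  show "eventually (\<lambda>y. cmod (fstar_rat k f y - c) \<le> B) (at x within \<rat>)"
    unfolding eventually_at_topological
  proof (rule exI[of _ U], intro conjI ballI impI)
    show "open U" "x \<in> U" using U by auto
    fix y assume "y \<in> U" "y \<noteq> x" "y \<in> \<rat>"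
    thus "cmod (fstar_rat k f y - c) \<le> B" using bd by simp
  qed
qed

lemma cbtw_irr_btw:
  assumes fp: "fpair p1 q1 p2 q2" and cb: "cbtw p1 q1 p2 q2 z" and z: "z \<notin> \<rat>"
  shows "btw p1 q1 p2 q2 z"
proof -
  have a: "1 \<le> q1" "1 \<le> q2" using fp by (auto simp: fpair_def)
  have "z * q1 - p1 \<noteq> 0"
  proof
    assume "z * q1 - p1 = 0"
    hence "z = real_of_int p1 / real_of_int q1" using a by (simp add: field_simps)
    thus False using z by simp
  qed
  moreover have "p2 - z * q2 \<noteq> 0"
  proof
    assume "p2 - z * q2 = 0"
    hence "z = real_of_int p2 / real_of_int q2" using a by (simp add: field_simps)
    thus False using z by simp
  qed
  ultimately show ?thesis using cb unfolding btw_def cbtw_def by (simp add: less_le)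
qed

lemma fstar_pair_bound:
  assumes fp: "fpair p1 q1 p2 q2" and cb: "cbtw p1 q1 p2 q2 z"
  shows "cmod (fstar k f z - G p1 q1) \<le> K * (real_of_int q1 powr (- Re k) + real_of_int q2 powr (- Re k))"
proof (cases "z \<in> \<rat>")
  case True
  thus ?thesis using rat_cbtw_bound[OF fp True cb] by (simp add: fstar_def)
next
  case False
  show ?thesis
  proof (rule irr_bound[OF False open_btw])
    show "z \<in> {z. btw p1 q1 p2 q2 z}" using cbtw_irr_btw[OF fp cb False] by simp
    fix y assume "y \<in> {z. btw p1 q1 p2 q2 z}" "y \<in> \<rat>"
    thus "cmod (fstar_rat k f y - G p1 q1) \<le> K * (real_of_int q1 powr (- Re k) + real_of_int q2 powr (- Re k))"
      using btw_cbtw by (intro rat_cbtw_bound[OF fp]) simp_all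
  qed
qed

lemma isCont_irr:
  assumes x: "x \<notin> \<rat>"
  shows "isCont (fstar k f) x"
  unfolding isCont_def LIM_eq
proof (intro allI impI)
  fix r :: real assume r: "r > 0"
  then obtain p1 q1 p2 q2 where fp: "fpair p1 q1 p2 q2" and b: "btw p1 q1 p2 q2 x"
    and B: "K * (real_of_int q1 powr (- Re k) + real_of_int q2 powr (- Re k)) < r / 2"
    using small_pair[OF x, of "r / 2" 0] by auto
  have "\<exists>d>0. \<forall>y. dist y x < d \<longrightarrow> y \<in> {z. btw p1 q1 p2 q2 z}"
    using open_btw[of p1 q1 p2 q2] b unfolding open_dist by simp
  then obtain d where d: "d > 0" "\<And>y. dist y x < d \<Longrightarrow> y \<in> {z. btw p1 q1 p2 q2 z}"
    by (elim exE conjE) auto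
  show "\<exists>s>0. \<forall>y. y \<noteq> x \<and> norm (y - x) < s \<longrightarrow> norm (fstar k f y - fstar k f x) < r"
  proof (intro exI[of _ d] conjI allI impI)
    show "d > 0" by fact
    fix y assume "y \<noteq> x \<and> norm (y - x) < d"
    hence "btw p1 q1 p2 q2 y" using d(2)[of y] by (simp add: dist_norm)
    hence "cmod (fstar k f y - G p1 q1) \<le> K * (real_of_int q1 powr (- Re k) + real_of_int q2 powr (- Re k))"
      by (intro fstar_pair_bound[OF fp] btw_cbtw)
    moreover have "cmod (fstar k f x - G p1 q1) \<le> K * (real_of_int q1 powr (- Re k) + real_of_int q2 powr (- Re k))"
      by (intro fstar_pair_bound[OF fp] btw_cbtw b)
    moreover have "cmod (fstar k f y - fstar k f x) \<le> cmod (fstar k f y - G p1 q1) + cmod (fstar k f x - G p1 q1)"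
      using norm_triangle_ineq4[of "fstar k f y - G p1 q1" "fstar k f x - G p1 q1"] by simp
    ultimately show "norm (fstar k f y - fstar k f x) < r" using B by simp
  qed
qed

end

lemma cbtw_iff:
  assumes "q1 > 0" "q2 > 0"
  shows "cbtw p1 q1 p2 q2 z \<longleftrightarrow> (z - p1 / q1) * (p2 / q2 - z) \<ge> 0"
proof -
  define c where "c = real_of_int q1 * real_of_int q2"
  define X where "X = (z - p1 / q1) * (p2 / q2 - z)"
  have eq: "(z * q1 - p1) * (p2 - z * q2) = c * X"
    using assms by (simp add: field_simps c_def X_def)
  have c: "c > 0" using assms by (simp add: c_def)
  have "(0 \<le> c * X) = (0 \<le> X)" using c by (simp add: zero_le_mult_iff)
  thus ?thesis unfolding cbtw_def eq X_def .
qed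

lemma powr_small:
  assumes "s > 0" "e > 0"
  shows "\<exists>N1::nat. \<forall>N\<ge>N1. real N powr (- s) < e"
proof -
  have "((\<lambda>N. real N powr (- s)) \<longlongrightarrow> 0) sequentially"
    using assms by (intro tendsto_neg_powr filterlim_real_sequentially) auto
  hence "eventually (\<lambda>N. real N powr (- s) < e) sequentially"
    using assms(2) by (rule order_tendstoD(2))
  thus ?thesis unfolding eventually_sequentially .
qed

context fsetup begin

lemma rat_coords:
  assumes fp: "fpair p1 q1 p2 q2" and yq: "y \<in> \<rat>" and cb: "cbtw p1 q1 p2 q2 y"
  shows "\<exists>m n. m \<ge> 0 \<and> n \<ge> 0 \<and> m + n > 0 \<and> fstar_rat k f y = G (m * p1 + n * p2) (m * q1 + n * q2)"
proof -
  obtain r where ry: "y = of_rat r" using yq Rats_cases by blast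
  obtain a q where aq: "quotient_of r = (a, q)" by (cases "quotient_of r") auto
  have q0: "q > 0" using quotient_of_denom_pos[OF aq] .
  have rv: "r = of_int a / of_int q" using quotient_of_div[OF aq] .
  have yv: "y = real_of_int a / real_of_int q" using ry rv by (simp add: of_rat_divide)
  have fs: "fstar_rat k f y = G a q" unfolding ry fstar_rat_of_rat G_def rv ..
  have a: "1 \<le> q1" "q1 \<le> q2" "\<bar>p1 * q2 - p2 * q1\<bar> = 1" using fp by (auto simp: fpair_def)
  define u where "u = a * q1 - p1 * q"
  define v where "v = p2 * q - a * q2"
  have uv: "real_of_int u * real_of_int v \<ge> 0"
  proof -
    have "(y * q1 - p1) = real_of_int u / real_of_int q" using q0 by (simp add: yv u_def field_simps)
    moreover have "(p2 - y * q2) = real_of_int v / real_of_int q" using q0 by (simp add: yv v_def field_simps)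
    ultimately have "(real_of_int u / real_of_int q) * (real_of_int v / real_of_int q) \<ge> 0"
      using cb by (simp add: cbtw_def)
    hence "(real_of_int u * real_of_int v) / (real_of_int q * real_of_int q) \<ge> 0" by simp
    moreover have "real_of_int q * real_of_int q > 0" using q0 by simp
    ultimately show ?thesis by (simp add: zero_le_divide_iff)
  qed
  hence uv': "u * v \<ge> 0" by (metis of_int_0_le_iff of_int_mult)
  define e where "e = p2 * q1 - p1 * q2"
  have "\<bar>e\<bar> = 1" using a(3) by (simp add: e_def abs_minus_commute)
  hence ee: "e * e = 1" by (metis abs_mult_self_eq mult_1)
  define m where "m = e * v"
  define n where "n = e * u"
  have ma: "m * p1 + n * p2 = a"
  proof -
    have "m * p1 + n * p2 = e * (a * e)" by (simp add: m_def n_def u_def v_def e_def algebra_simps)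
    thus ?thesis using ee by (simp add: algebra_simps)
  qed
  have mq: "m * q1 + n * q2 = q"
  proof -
    have "m * q1 + n * q2 = e * (q * e)" by (simp add: m_def n_def u_def v_def e_def algebra_simps)
    thus ?thesis using ee by (simp add: algebra_simps)
  qed
  have "m * n = (e * e) * (u * v)" by (simp add: m_def n_def algebra_simps)
  hence mn: "m * n \<ge> 0" using uv' ee by simp
  have m0: "m \<ge> 0"
  proof (rule ccontr)
    assume "\<not> m \<ge> 0"
    hence "m < 0" by simp
    have "n \<le> 0"
    proof (rule ccontr)
      assume "\<not> n \<le> 0" hence "m * n < 0" using \<open>m < 0\<close> by (simp add: mult_neg_pos)
      thus False using mn by simp
    qed
    have "m * q1 < 0" using \<open>m < 0\<close> a by (simp add: mult_neg_pos)
    moreover have "n * q2 \<le> 0" using \<open>n \<le> 0\<close> a by (simp add: mult_nonpos_nonneg)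
    ultimately have "m * q1 + n * q2 < 0" by simp
    thus False using mq q0 by simp
  qed
  have n0: "n \<ge> 0"
  proof (rule ccontr)
    assume "\<not> n \<ge> 0"
    hence "n < 0" by simp
    have "m \<le> 0"
    proof (rule ccontr)
      assume "\<not> m \<le> 0" hence "m * n < 0" using \<open>n < 0\<close> by (simp add: mult_pos_neg)
      thus False using mn by simp
    qed
    have "n * q2 < 0" using \<open>n < 0\<close> a by (simp add: mult_neg_pos)
    moreover have "m * q1 \<le> 0" using \<open>m \<le> 0\<close> a by (simp add: mult_nonpos_nonneg)
    ultimately have "m * q1 + n * q2 < 0" by simp
    thus False using mq q0 by simp
  qed
  have mn0: "m + n > 0"
  proof (rule ccontr)
    assume "\<not> m + n > 0"
    hence "m = 0" "n = 0" using m0 n0 by auto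
    thus False using mq q0 by simp
  qed
  show ?thesis using m0 n0 mn0 fs ma mq by (intro exI[of _ m] exI[of _ n]) simp
qed

lemma mid_bound:
  assumes fp: "fpair p1 q1 p2 q2" and m: "m \<ge> 0" and n: "n \<ge> 1"
  shows "\<exists>i\<ge>0. cmod (G (m * p1 + n * p2) (m * q1 + n * q2) - G (i * p1 + p2) (i * q1 + q2))
            \<le> 2 * K * real_of_int q2 powr (- Re k)"
proof -
  have Kp: "K \<ge> 0" using K_props by simp
  have a: "1 \<le> q1" "q1 \<le> q2" using fp by (auto simp: fpair_def)
  show ?thesis
  proof (cases "m = 0")
    case True
    hence "G (m * p1 + n * p2) (m * q1 + n * q2) = G p2 q2" using n G_scale[of n] by simp
    thus ?thesis using Kp by (intro exI[of _ 0]) simp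
  next
    case False
    hence mp: "m > 0" using m by simp
    have np: "n > 0" using n by simp
    define i where "i = m div n"
    define m' where "m' = m mod n"
    define n' where "n' = n - m mod n"
    have i0: "i \<ge> 0" using mp np by (simp add: i_def pos_imp_zdiv_nonneg_iff)
    have m'b: "0 \<le> m'" "m' < n" using np by (auto simp: m'_def)
    have n'p: "n' > 0" using m'b by (simp add: n'_def m'_def)
    have mdec: "m = n * i + m'" by (simp add: i_def m'_def)
    define a1 where "a1 = i * p1 + p2"
    define b1 where "b1 = i * q1 + q2"
    define a2 where "a2 = (i + 1) * p1 + p2"
    define b2 where "b2 = (i + 1) * q1 + q2"
    have nm: "n' + m' = n" by (simp add: n'_def m'_def)
    have "n' * a1 + m' * a2 = (n' + m') * a1 + m' * p1" by (simp add: a1_def a2_def algebra_simps)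
    also have "\<dots> = m * p1 + n * p2" unfolding nm mdec by (simp add: a1_def algebra_simps)
    finally have eqa: "m * p1 + n * p2 = n' * a1 + m' * a2" by simp
    have "n' * b1 + m' * b2 = (n' + m') * b1 + m' * q1" by (simp add: b1_def b2_def algebra_simps)
    also have "\<dots> = m * q1 + n * q2" unfolding nm mdec by (simp add: b1_def algebra_simps)
    finally have eqb: "m * q1 + n * q2 = n' * b1 + m' * b2" by simp
    note cp = child_pair[OF fp i0]
    have fp': "fpair a1 b1 a2 b2" using cp(1) by (simp add: a1_def a2_def b1_def b2_def)
    have b1ge: "b1 \<ge> q2" using cp(2) by (simp add: b1_def)
    have b2ge: "b2 \<ge> q2" using cp(3) a by (simp add: b2_def)
    have mlb: "cmod (G (n' * a1 + m' * a2) (n' * b1 + m' * b2) - G a1 b1)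
           \<le> K * (real_of_int b1 powr (- Re k) + real_of_int b2 powr (- Re k))"
      by (rule main_bound) (insert n'p m'b fp', auto simp: fpair_def)
    have e1: "real_of_int b1 powr (- Re k) \<le> real_of_int q2 powr (- Re k)"
      using b1ge a k_pos by (intro powr_anti) auto
    have e2: "real_of_int b2 powr (- Re k) \<le> real_of_int q2 powr (- Re k)"
      using b2ge a k_pos by (intro powr_anti) auto
    have "K * (real_of_int b1 powr (- Re k) + real_of_int b2 powr (- Re k)) \<le> K * (real_of_int q2 powr (- Re k) + real_of_int q2 powr (- Re k))"
      using e1 e2 Kp by (intro mult_left_mono) auto
    also have "\<dots> = 2 * K * real_of_int q2 powr (- Re k)" by (simp add: algebra_simps)
    finally have e3: "K * (real_of_int b1 powr (- Re k) + real_of_int b2 powr (- Re k)) \<le> 2 * K * real_of_int q2 powr (- Re k)" .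
    have "cmod (G (m * p1 + n * p2) (m * q1 + n * q2) - G a1 b1) \<le> 2 * K * real_of_int q2 powr (- Re k)"
      unfolding eqa eqb using mlb e3 by linarith
    thus ?thesis using i0 unfolding a1_def b1_def by (intro exI[of _ i]) simp
  qed
qed

lemma side:
  assumes ho: "\<forall>\<epsilon>>0. \<forall>\<^sub>F x in at (0::real). cmod (h x) \<le> \<epsilon> * \<bar>x\<bar> powr (- Re k)"
    and q0: "q0 \<ge> 1" and Q: "\<bar>a0 * q2 - p2 * q0\<bar> = 1" "q2 \<ge> 1" and eta: "\<eta> > 0"
  shows "\<exists>J\<ge>1. \<forall>z. cbtw a0 q0 (J * a0 + p2) (J * q0 + q2) z \<longrightarrow> cmod (fstar k f z - G a0 q0) \<le> \<eta>"
proof -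
  define s where "s = Re k"
  have s: "s > 0" using k_pos by (simp add: s_def)
  have Kp: "K \<ge> 0" using K_props by simp
  have "\<forall>\<^sub>F x in at (0::real). cmod (h x) \<le> (\<eta> / 2) * \<bar>x\<bar> powr (- Re k)"
    by (rule ho[rule_format]) (use eta in simp)
  hence "\<exists>d>0. \<forall>x\<in>UNIV. x \<noteq> 0 \<and> dist x 0 < d \<longrightarrow> cmod (h x) \<le> (\<eta> / 2) * \<bar>x\<bar> powr (- Re k)"
    unfolding eventually_at .
  then obtain \<rho> where rho0: "\<rho> > 0" and rho1: "\<forall>x\<in>UNIV. x \<noteq> 0 \<and> dist x 0 < \<rho> \<longrightarrow> cmod (h x) \<le> (\<eta> / 2) * \<bar>x\<bar> powr (- Re k)"
    by (elim exE conjE)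
  have rho: "\<rho> > 0" "\<And>x. x \<noteq> 0 \<Longrightarrow> dist x 0 < \<rho> \<Longrightarrow> cmod (h x) \<le> (\<eta> / 2) * \<bar>x\<bar> powr (- Re k)"
    using rho0 rho1 by simp_all
  obtain N1 where N1: "\<And>N. N \<ge> N1 \<Longrightarrow> real N powr (- s) < \<eta> / (4 * K + 1)"
    using powr_small[OF s, of "\<eta> / (4 * K + 1)"] eta Kp by auto
  define Jn where "Jn = max N1 (nat \<lceil>1 / \<rho>\<rceil> + 1)"
  define J where "J = int Jn"
  have J1: "J \<ge> 1" by (simp add: J_def Jn_def)
  have Jrho: "1 / real_of_int J < \<rho>"
  proof -
    have "real_of_int J > 1 / \<rho>" unfolding J_def Jn_def by (simp) linarith
    thus ?thesis using rho(1) J1 by (simp add: field_simps)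
  qed
  have JN: "real_of_int J powr (- s) < \<eta> / (4 * K + 1)" using N1[of Jn] by (simp add: J_def Jn_def)
  define p2' where "p2' = J * a0 + p2"
  define q2' where "q2' = J * q0 + q2"
  have "J * 1 \<le> J * q0" using J1 q0 by (intro mult_left_mono) auto
  hence q2'J: "q2' \<ge> J" using Q by (simp add: q2'_def)
  have fp: "fpair a0 q0 p2' q2'"
  proof -
    have "a0 * q2' - p2' * q0 = a0 * q2 - p2 * q0" by (simp add: p2'_def q2'_def algebra_simps)
    moreover have "1 * q0 \<le> J * q0" using J1 q0 by (intro mult_right_mono) auto
    hence "q0 \<le> q2'" using Q by (simp add: q2'_def)
    ultimately show ?thesis using q0 Q by (simp add: fpair_def)
  qed
  have K2: "2 * K * real_of_int q2' powr (- s) \<le> \<eta> / 2"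
  proof -
    have "real_of_int q2' powr (- s) \<le> real_of_int J powr (- s)" using q2'J J1 s by (intro powr_anti) auto
    hence "2 * K * real_of_int q2' powr (- s) \<le> 2 * K * (\<eta> / (4 * K + 1))"
      using JN Kp by (intro mult_left_mono) auto
    also have "\<dots> \<le> \<eta> / 2" using Kp eta by (simp add: field_simps)
    finally show ?thesis .
  qed
  have ratc: "cmod (fstar_rat k f z - G a0 q0) \<le> \<eta>" if zq: "z \<in> \<rat>" and cb: "cbtw a0 q0 p2' q2' z" for z
  proof -
    obtain m n where mn: "m \<ge> 0" "n \<ge> 0" "m + n > 0" and fz: "fstar_rat k f z = G (m * a0 + n * p2') (m * q0 + n * q2')"
      using rat_coords[OF fp zq cb] by blast
    show ?thesis
    proof (cases "n = 0")
      case True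
      hence "fstar_rat k f z = G a0 q0" using fz mn G_scale[of m] by simp
      thus ?thesis using eta by simp
    next
      case False
      hence n1: "n \<ge> 1" using mn by simp
      obtain i where i: "i \<ge> 0" and bi: "cmod (G (m * a0 + n * p2') (m * q0 + n * q2') - G (i * a0 + p2') (i * q0 + q2'))
            \<le> 2 * K * real_of_int q2' powr (- Re k)"
        using mid_bound[OF fp mn(1) n1] by blast
      define D where "D = i * q0 + q2'"
      have iq: "i * q0 \<ge> 0" using i q0 by simp
      have DJ: "D \<ge> J" using iq q2'J by (simp add: D_def)
      have Dq: "q0 \<le> D" using fp iq by (simp add: D_def fpair_def)
      have nb: "cmod (G (i * a0 + p2') D - G a0 q0) \<le> (\<eta> / 2) * real_of_int q0 powr (- Re k)"
        unfolding G_def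
      proof (rule neighbor_gen)
        show "0 < D" "0 < q0" "q0 \<le> D" using Dq q0 by auto
        have "(i * a0 + p2') * q0 - a0 * D = p2' * q0 - a0 * q2'" by (simp add: D_def algebra_simps)
        thus "\<bar>(i * a0 + p2') * q0 - a0 * D\<bar> = 1" using fp by (simp add: fpair_def abs_minus_commute)
        fix x :: real assume x: "x \<noteq> 0" "\<bar>x\<bar> = real_of_int q0 / real_of_int D"
        have DJq: "D \<ge> J * q0" using iq Q by (simp add: D_def q2'_def)
        hence DJr: "real_of_int D \<ge> real_of_int J * real_of_int q0" by (metis of_int_le_iff of_int_mult)
        have Jq: "real_of_int J * real_of_int q0 > 0" using J1 q0 by simp
        hence "real_of_int D * (real_of_int J * real_of_int q0) > 0" using DJr by simp
        hence "real_of_int q0 / real_of_int D \<le> real_of_int q0 / (real_of_int J * real_of_int q0)"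
          using q0 DJr by (intro divide_left_mono) auto
        also have "\<dots> = 1 / real_of_int J" using q0 by simp
        finally have "\<bar>x\<bar> < \<rho>" using x Jrho by linarith
        thus "cmod (h x) \<le> (\<eta> / 2) * \<bar>x\<bar> powr (- Re k)" using rho(2)[OF x(1)] by simp
      qed
      have "real_of_int q0 powr (- Re k) \<le> 1 powr (- Re k)" using q0 k_pos by (intro powr_anti) auto
      hence q0s: "real_of_int q0 powr (- Re k) \<le> 1" by simp
      have "(\<eta> / 2) * real_of_int q0 powr (- Re k) \<le> (\<eta> / 2) * 1" using q0s eta by (intro mult_left_mono) auto
      hence nb': "cmod (G (i * a0 + p2') D - G a0 q0) \<le> \<eta> / 2" using nb by simp
      have "cmod (fstar_rat k f z - G a0 q0) \<le> cmod (G (m * a0 + n * p2') (m * q0 + n * q2') - G (i * a0 + p2') D)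
              + cmod (G (i * a0 + p2') D - G a0 q0)"
        unfolding fz using norm_triangle_ineq[of "G (m * a0 + n * p2') (m * q0 + n * q2') - G (i * a0 + p2') D" "G (i * a0 + p2') D - G a0 q0"] by simp
      also have "\<dots> \<le> \<eta> / 2 + \<eta> / 2" using bi K2 nb' unfolding D_def s_def by linarith
      finally show ?thesis by simp
    qed
  qed
  have allc: "cmod (fstar k f z - G a0 q0) \<le> \<eta>" if cb: "cbtw a0 q0 p2' q2' z" for z
  proof (cases "z \<in> \<rat>")
    case True
    thus ?thesis using ratc[OF True cb] by (simp add: fstar_def)
  next
    case False
    show ?thesis
    proof (rule irr_bound[OF False open_btw])
      show "z \<in> {z. btw a0 q0 p2' q2' z}" using cbtw_irr_btw[OF fp cb False] by simp
      fix y assume "y \<in> {z. btw a0 q0 p2' q2' z}" "y \<in> \<rat>"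
      thus "cmod (fstar_rat k f y - G a0 q0) \<le> \<eta>" using ratc btw_cbtw by simp
    qed
  qed
  show ?thesis
  proof (intro exI[of _ J] conjI allI impI)
    show "J \<ge> 1" by (rule J1)
    fix z assume "cbtw a0 q0 (J * a0 + p2) (J * q0 + q2) z"
    thus "cmod (fstar k f z - G a0 q0) \<le> \<eta>" using allc unfolding p2'_def q2'_def by simp
  qed
qed

end

context fsetup begin

lemma cont_rat:
  assumes ho: "\<forall>\<epsilon>>0. \<forall>\<^sub>F x in at (0::real). cmod (h x) \<le> \<epsilon> * \<bar>x\<bar> powr (- Re k)"
    and x0: "x0 \<in> \<rat>"
  shows "isCont (fstar k f) x0"
proof -
  obtain r where rx: "x0 = of_rat r" using x0 Rats_cases by blast
  obtain a0 q0 where aq: "quotient_of r = (a0, q0)" by (cases "quotient_of r") auto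
  have q0p: "q0 > 0" using quotient_of_denom_pos[OF aq] .
  hence q0: "q0 \<ge> 1" by simp
  have cop: "coprime a0 q0" using quotient_of_coprime[OF aq] .
  have rv: "r = of_int a0 / of_int q0" using quotient_of_div[OF aq] .
  have x0v: "x0 = real_of_int a0 / real_of_int q0" using rx rv by (simp add: of_rat_divide)
  have fx0: "fstar k f x0 = G a0 q0"
    using x0 unfolding fstar_def rx fstar_rat_of_rat G_def rv by simp
  obtain u v where uv: "u * a0 + v * q0 = gcd a0 q0" using bezout_int by blast
  hence uv1: "u * a0 + v * q0 = 1" using cop by simp
  define T where "T = \<bar>u\<bar> + 1"
  have T1: "T \<ge> 1" by (simp add: T_def)
  have "T * 1 \<le> T * q0" using T1 q0 by (intro mult_left_mono) auto
  hence Tq: "T * q0 \<ge> T" by simp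
  define q2 where "q2 = u + T * q0"
  define p2 where "p2 = T * a0 - v"
  define q3 where "q3 = T * q0 - u"
  define p3 where "p3 = T * a0 + v"
  have uT: "u + T \<ge> 1" "T - u \<ge> 1" unfolding T_def by linarith+
  have q2: "q2 \<ge> 1" using Tq uT unfolding q2_def by linarith
  have q3: "q3 \<ge> 1" using Tq uT unfolding q3_def by linarith
  have d2: "a0 * q2 - p2 * q0 = 1" using uv1 by (simp add: q2_def p2_def algebra_simps)
  have d3: "a0 * q3 - p3 * q0 = -1" using uv1 by (simp add: q3_def p3_def algebra_simps)
  show ?thesis unfolding isCont_def LIM_eq
  proof (intro allI impI)
    fix \<epsilon> :: real assume e: "\<epsilon> > 0"
    have e2: "\<epsilon> / 2 > 0" using e by simp
    have d2a: "\<bar>a0 * q2 - p2 * q0\<bar> = 1" using d2 by simp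
    have d3a: "\<bar>a0 * q3 - p3 * q0\<bar> = 1" using d3 by simp
    obtain J1 where J1: "J1 \<ge> 1" and S1a: "\<forall>z. cbtw a0 q0 (J1 * a0 + p2) (J1 * q0 + q2) z \<longrightarrow> cmod (fstar k f z - G a0 q0) \<le> \<epsilon> / 2"
      using side[OF ho q0 d2a q2 e2] by (elim exE conjE)
    obtain J2 where J2: "J2 \<ge> 1" and S2a: "\<forall>z. cbtw a0 q0 (J2 * a0 + p3) (J2 * q0 + q3) z \<longrightarrow> cmod (fstar k f z - G a0 q0) \<le> \<epsilon> / 2"
      using side[OF ho q0 d3a q3 e2] by (elim exE conjE)
    have S1: "\<And>z. cbtw a0 q0 (J1 * a0 + p2) (J1 * q0 + q2) z \<Longrightarrow> cmod (fstar k f z - G a0 q0) \<le> \<epsilon> / 2"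
      using S1a by simp
    have S2: "\<And>z. cbtw a0 q0 (J2 * a0 + p3) (J2 * q0 + q3) z \<Longrightarrow> cmod (fstar k f z - G a0 q0) \<le> \<epsilon> / 2"
      using S2a by simp
    define P2 where "P2 = J1 * a0 + p2"
    define Q2 where "Q2 = J1 * q0 + q2"
    define P3 where "P3 = J2 * a0 + p3"
    define Q3 where "Q3 = J2 * q0 + q3"
    have Q2p: "Q2 > 0" using J1 q0 q2 by (simp add: Q2_def add_pos_pos)
    have Q3p: "Q3 > 0" using J2 q0 q3 by (simp add: Q3_def add_pos_pos)
    have D2: "a0 * Q2 - P2 * q0 = 1" using d2 by (simp add: P2_def Q2_def algebra_simps)
    have D3: "a0 * Q3 - P3 * q0 = -1" using d3 by (simp add: P3_def Q3_def algebra_simps)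
    define w1 where "w1 = real_of_int P2 / real_of_int Q2"
    define w2 where "w2 = real_of_int P3 / real_of_int Q3"
    have D2r: "real_of_int a0 * real_of_int Q2 - real_of_int P2 * real_of_int q0 = 1"
      using arg_cong[OF D2, of real_of_int] by simp
    have D3r: "real_of_int a0 * real_of_int Q3 - real_of_int P3 * real_of_int q0 = -1"
      using arg_cong[OF D3, of real_of_int] by simp
    have w1x: "x0 - w1 = 1 / (real_of_int q0 * real_of_int Q2)"
      using q0p Q2p D2r by (simp add: x0v w1_def field_simps)
    have w2x: "w2 - x0 = 1 / (real_of_int q0 * real_of_int Q3)"
      using q0p Q3p D3r by (simp add: x0v w2_def field_simps)
    have pos1: "x0 - w1 > 0" unfolding w1x using q0p Q2p by simp
    have pos2: "w2 - x0 > 0" unfolding w2x using q0p Q3p by simp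
    define d where "d = min (x0 - w1) (w2 - x0)"
    show "\<exists>s>0. \<forall>y. y \<noteq> x0 \<and> norm (y - x0) < s \<longrightarrow> norm (fstar k f y - fstar k f x0) < \<epsilon>"
    proof (intro exI[of _ d] conjI allI impI)
      show "d > 0" using pos1 pos2 by (simp add: d_def)
      fix y assume y: "y \<noteq> x0 \<and> norm (y - x0) < d"
      have "cmod (fstar k f y - G a0 q0) \<le> \<epsilon> / 2"
      proof (cases "y < x0")
        case True
        have "w1 < y" using y True by (simp add: d_def)
        hence "(y - real_of_int a0 / real_of_int q0) * (real_of_int P2 / real_of_int Q2 - y) \<ge> 0"
          using True unfolding x0v[symmetric] w1_def[symmetric] by (simp add: mult_nonpos_nonpos)
        hence "cbtw a0 q0 P2 Q2 y" using cbtw_iff[OF q0p Q2p] by simp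
        thus ?thesis using S1 unfolding P2_def Q2_def by simp
      next
        case False
        hence yx: "y > x0" using y by simp
        have "y < w2" using y yx by (simp add: d_def)
        hence "(y - real_of_int a0 / real_of_int q0) * (real_of_int P3 / real_of_int Q3 - y) \<ge> 0"
          using yx unfolding x0v[symmetric] w2_def[symmetric] by simp
        hence "cbtw a0 q0 P3 Q3 y" using cbtw_iff[OF q0p Q3p] by simp
        thus ?thesis using S2 unfolding P3_def Q3_def by simp
      qed
      thus "norm (fstar k f y - fstar k f x0) < \<epsilon>" using e fx0 by simp
    qed
  qed
qed

lemma cont_all:
  assumes ho: "\<forall>\<epsilon>>0. \<forall>\<^sub>F x in at (0::real). cmod (h x) \<le> \<epsilon> * \<bar>x\<bar> powr (- Re k)"
  shows "continuous_on UNIV (fstar k f)"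
proof (rule continuous_at_imp_continuous_on, intro ballI)
  fix x :: real assume "x \<in> UNIV"
  show "isCont (fstar k f) x"
  proof (cases "x \<in> \<rat>")
    case True thus ?thesis by (rule cont_rat[OF ho])
  next
    case False thus ?thesis by (rule isCont_irr)
  qed
qed

end

definition Aset :: "real \<Rightarrow> int \<Rightarrow> nat \<Rightarrow> real set" where
  "Aset \<tau> l n = (\<Union>a\<in>{l * int (Suc n) - 1 .. (l + 1) * int (Suc n) + 1}.
      ball (of_int a / real (Suc n)) (real (Suc n) powr (-(2 + \<tau>))))"

lemma Aset_open: "open (Aset \<tau> l n)"
  unfolding Aset_def by (intro open_UN ballI open_ball)

lemma Aset_sets: "Aset \<tau> l n \<in> sets lborel"
  using Aset_open by simp

lemma Aset_fin: "emeasure lborel (Aset \<tau> l n) < \<infinity>"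
  unfolding Aset_def by (intro emeasure_bounded_finite bounded_UN) auto

lemma measure_ball_real: "r \<ge> 0 \<Longrightarrow> measure lborel (ball (c::real) r) = 2 * r"
  by (simp add: measure_def ball_eq_greaterThanLessThan)

lemma Aset_measure:
  assumes "\<tau> > 0"
  shows "measure lborel (Aset \<tau> l n) \<le> 8 * real (Suc n) powr (-(1 + \<tau>))"
proof -
  define q where "q = real (Suc n)"
  have q1: "q \<ge> 1" by (simp add: q_def)
  define r where "r = q powr (-(2 + \<tau>))"
  have r0: "r \<ge> 0" by (simp add: r_def)
  define I where "I = {l * int (Suc n) - 1 .. (l + 1) * int (Suc n) + 1}"
  have cI: "real (card I) = q + 3" by (simp add: I_def q_def algebra_simps)
  have "measure lborel (Aset \<tau> l n) \<le> (\<Sum>a\<in>I. measure lborel (ball (of_int a / real (Suc n)) r))"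
    unfolding Aset_def I_def[symmetric] r_def q_def by (rule measure_UNION_le) (auto simp: I_def)
  also have "\<dots> = real (card I) * (2 * r)" using r0 by (simp add: measure_ball_real)
  also have "\<dots> = (q + 3) * (2 * r)" by (simp add: cI)
  also have "\<dots> \<le> (4 * q) * (2 * r)" using q1 r0 by (intro mult_right_mono) auto
  also have "\<dots> = 8 * (q * r)" by simp
  also have "q * r = q powr (-(1 + \<tau>))"
  proof -
    have e1: "q powr 1 * q powr (-(2 + \<tau>)) = q powr (1 + (-(2 + \<tau>)))" by (rule powr_add[symmetric])
    have e2: "q powr 1 = q" using q1 by simp
    have e3: "1 + (-(2 + \<tau>)) = -(1 + \<tau>)" by simp
    show ?thesis using e1 unfolding e2 e3 r_def .
  qed
  finally show ?thesis by (simp add: q_def)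
qed

lemma Aset_summable:
  assumes "\<tau> > 0"
  shows "summable (\<lambda>n. measure lborel (Aset \<tau> l n))"
proof (rule summable_comparison_test')
  have "summable (\<lambda>n. real n powr (-(1 + \<tau>)))" using assms by (simp add: summable_real_powr_iff)
  hence "summable (\<lambda>n. real (Suc n) powr (-(1 + \<tau>)))" by (subst summable_Suc_iff)
  thus "summable (\<lambda>n. 8 * real (Suc n) powr (-(1 + \<tau>)))" by (rule summable_mult)
  fix n :: nat assume "n \<ge> 0"
  show "norm (measure lborel (Aset \<tau> l n)) \<le> 8 * real (Suc n) powr (-(1 + \<tau>))"
    using Aset_measure[OF assms] by simp
qed

lemma Aset_limsup_null:
  assumes "\<tau> > 0"
  shows "limsup (Aset \<tau> l) \<in> null_sets lborel"
  by (rule borel_cantelli_limsup1) (use Aset_sets Aset_fin Aset_summable[OF assms] in auto)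

definition Nset :: "real set" where
  "Nset = \<rat> \<union> (\<Union>m::nat. \<Union>l::int. limsup (Aset (1 / real (Suc m)) l))"

lemma Nset_null: "Nset \<in> null_sets lborel"
proof -
  have "\<rat> \<in> null_sets lborel" by (rule countable_imp_null_set_lborel[OF countable_rat])
  moreover have "(\<Union>m::nat. \<Union>l::int. limsup (Aset (1 / real (Suc m)) l)) \<in> null_sets lborel"
  proof (rule null_sets_UN)
    fix m :: nat
    show "(\<Union>l::int. limsup (Aset (1 / real (Suc m)) l)) \<in> null_sets lborel"
      by (rule null_sets_UN) (rule Aset_limsup_null, simp)
  qed
  ultimately show ?thesis unfolding Nset_def by (rule null_sets.Un)
qed

lemma dio:
  assumes x: "x \<notin> Nset"
  shows "\<exists>Q0\<ge>1. \<forall>q a. q \<ge> Q0 \<longrightarrow> \<bar>x - of_int a / of_int q\<bar> \<ge> real_of_int q powr (-(2 + 1 / real (Suc m)))"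
proof -
  define \<tau> where "\<tau> = 1 / real (Suc m)"
  have tau: "\<tau> > 0" by (simp add: \<tau>_def)
  define l where "l = \<lfloor>x\<rfloor>"
  have lx: "of_int l \<le> x" "x < of_int l + 1" using floor_correct[of x] by (simp_all add: l_def)
  have "x \<notin> limsup (Aset \<tau> l)" using x unfolding Nset_def \<tau>_def by blast
  then obtain n0 where n0: "\<And>n. n \<ge> n0 \<Longrightarrow> x \<notin> Aset \<tau> l n"
    unfolding limsup_INF_SUP by auto
  show ?thesis
  proof (intro exI[of _ "int n0 + 1"] conjI allI impI)
    show "int n0 + 1 \<ge> 1" by simp
    fix q a :: int assume q: "q \<ge> int n0 + 1"
    define n where "n = nat q - 1"
    have qn: "q = int (Suc n)" using q by (simp add: n_def)
    have nn: "n \<ge> n0" using q by (simp add: n_def)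
    have q1: "q \<ge> 1" using q by simp
    have rq: "real_of_int q powr (-(2 + \<tau>)) \<le> 1 / real_of_int q"
    proof -
      have "real_of_int q powr (-(2 + \<tau>)) \<le> real_of_int q powr (-1)"
        using q1 tau by (intro powr_mono) auto
      thus ?thesis using q1 by (simp add: powr_minus divide_inverse)
    qed
    have main: "\<bar>x - of_int a / of_int q\<bar> \<ge> real_of_int q powr (-(2 + \<tau>))"
    proof (cases "a \<in> {l * q - 1 .. (l + 1) * q + 1}")
      case True
      have "x \<notin> ball (of_int a / real (Suc n)) (real (Suc n) powr (-(2 + \<tau>)))"
        using n0[OF nn] True unfolding Aset_def qn by blast
      thus ?thesis unfolding qn by (simp add: dist_real_def abs_minus_commute)
    next
      case False
      hence "a \<le> l * q - 2 \<or> a \<ge> (l + 1) * q + 2" by auto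
      hence "\<bar>x - of_int a / of_int q\<bar> \<ge> 1 / real_of_int q"
      proof
        assume "a \<le> l * q - 2"
        hence "real_of_int a \<le> real_of_int l * real_of_int q - 2" by (metis of_int_le_iff of_int_mult of_int_diff of_int_numeral)
        hence "real_of_int a / real_of_int q \<le> (real_of_int l * real_of_int q - 2) / real_of_int q"
          using q1 by (intro divide_right_mono) auto
        also have "\<dots> = real_of_int l - 2 / real_of_int q" using q1 by (simp add: diff_divide_distrib)
        finally have "real_of_int a / real_of_int q \<le> real_of_int l - 2 / real_of_int q" .
        moreover have "2 / real_of_int q \<ge> 1 / real_of_int q" using q1 by (simp add: divide_right_mono)
        ultimately show ?thesis using lx by linarith
      next
        assume "a \<ge> (l + 1) * q + 2"
        hence "real_of_int a \<ge> (real_of_int l + 1) * real_of_int q + 2" by (metis of_int_le_iff of_int_mult of_int_add of_int_numeral of_int_1)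
        hence "real_of_int a / real_of_int q \<ge> ((real_of_int l + 1) * real_of_int q + 2) / real_of_int q"
          using q1 by (intro divide_right_mono) auto
        moreover have "((real_of_int l + 1) * real_of_int q + 2) / real_of_int q = real_of_int l + 1 + 2 / real_of_int q"
          using q1 by (simp add: add_divide_distrib)
        ultimately have "real_of_int a / real_of_int q \<ge> real_of_int l + 1 + 2 / real_of_int q" by simp
        moreover have "2 / real_of_int q \<ge> 1 / real_of_int q" using q1 by (simp add: divide_right_mono)
        ultimately show ?thesis using lx by linarith
      qed
      thus ?thesis using rq by linarith
    qed
    thus "\<bar>x - of_int a / of_int q\<bar> \<ge> real_of_int q powr (-(2 + 1 / real (Suc m)))" by (simp add: \<tau>_def)
  qed
qed

lemma R1:
  fixes x P Q :: real
  assumes "(x - P) * (Q - x) \<ge> 0"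
  shows "min P Q \<le> x \<and> x \<le> max P Q"
proof (rule ccontr)
  assume "\<not> (min P Q \<le> x \<and> x \<le> max P Q)"
  hence "x < min P Q \<or> x > max P Q" by auto
  thus False
  proof
    assume "x < min P Q"
    hence "x - P < 0" "Q - x > 0" by auto
    hence "(x - P) * (Q - x) < 0" by (rule mult_neg_pos)
    thus False using assms by simp
  next
    assume "x > max P Q"
    hence "x - P > 0" "Q - x < 0" by auto
    hence "(x - P) * (Q - x) < 0" by (rule mult_pos_neg)
    thus False using assms by simp
  qed
qed

lemma R1s:
  fixes x P Q :: real
  assumes "(x - P) * (Q - x) > 0"
  shows "min P Q < x \<and> x < max P Q"
proof -
  have "x \<noteq> P" "x \<noteq> Q" using assms by auto
  thus ?thesis using R1[of x P Q] assms by auto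
qed

lemma R1o:
  fixes y P Q :: real
  assumes "(y - P) * (Q - y) < 0"
  shows "y < min P Q \<or> y > max P Q"
proof (rule ccontr)
  assume "\<not> (y < min P Q \<or> y > max P Q)"
  hence a: "min P Q \<le> y" "y \<le> max P Q" by auto
  have "(y - P) * (Q - y) \<ge> 0"
  proof (cases "P \<le> Q")
    case True
    hence "y - P \<ge> 0" "Q - y \<ge> 0" using a by auto
    thus ?thesis by simp
  next
    case False
    hence "y - P \<le> 0" "Q - y \<le> 0" using a by auto
    thus ?thesis by (simp add: mult_nonpos_nonpos)
  qed
  thus False using assms by simp
qed

lemma R2:
  fixes x y P Q :: real
  assumes "(x - P) * (Q - x) \<ge> 0" "(y - P) * (Q - y) \<ge> 0"
  shows "\<bar>y - x\<bar> \<le> \<bar>Q - P\<bar>"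
  using R1[OF assms(1)] R1[OF assms(2)] by (cases "P \<le> Q") (auto simp: min_def max_def abs_le_iff)

lemma R3:
  fixes x y w1 w2 :: real
  assumes "(x - w1) * (w2 - x) > 0" "(y - w1) * (w2 - y) < 0"
  shows "\<bar>y - x\<bar> \<ge> min \<bar>x - w1\<bar> \<bar>x - w2\<bar>"
proof -
  have a: "min w1 w2 < x" "x < max w1 w2" using R1s[OF assms(1)] by auto
  have b: "y < min w1 w2 \<or> y > max w1 w2" using R1o[OF assms(2)] .
  show ?thesis
  proof (cases "w1 \<le> w2")
    case True
    thus ?thesis using a b by (auto simp: min_def max_def abs_if)
  next
    case False
    thus ?thesis using a b by (auto simp: min_def max_def abs_if)
  qed
qed

lemma R4:
  fixes x P w1 w2 :: real
  assumes "(x - w1) * (w2 - x) > 0"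
  shows "\<bar>x - P\<bar> \<le> max \<bar>w1 - P\<bar> \<bar>w2 - P\<bar>"
proof -
  have a: "min w1 w2 < x" "x < max w1 w2" using R1s[OF assms] by auto
  show ?thesis
  proof (cases "w1 \<le> w2")
    case True
    thus ?thesis using a by (auto simp: min_def max_def abs_if)
  next
    case False
    thus ?thesis using a by (auto simp: min_def max_def abs_if)
  qed
qed

lemma btw_iff:
  assumes "q1 > 0" "q2 > 0"
  shows "btw p1 q1 p2 q2 z \<longleftrightarrow> (z - p1 / q1) * (p2 / q2 - z) > 0"
proof -
  define c where "c = real_of_int q1 * real_of_int q2"
  define X where "X = (z - p1 / q1) * (p2 / q2 - z)"
  have eq: "(z * q1 - p1) * (p2 - z * q2) = c * X"
    using assms by (simp add: field_simps c_def X_def)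
  have c: "c > 0" using assms by (simp add: c_def)
  have "(0 < c * X) = (0 < X)" using c by (simp add: zero_less_mult_iff)
  thus ?thesis unfolding btw_def eq X_def .
qed

lemma frac_dist:
  assumes "q > 0" "r > 0" "\<bar>a * r - p * q\<bar> = 1"
  shows "\<bar>real_of_int a / real_of_int q - real_of_int p / real_of_int r\<bar> = 1 / (real_of_int q * real_of_int r)"
proof -
  have "real_of_int a / real_of_int q - real_of_int p / real_of_int r = real_of_int (a * r - p * q) / (real_of_int q * real_of_int r)"
    using assms by (simp add: field_simps)
  moreover have "\<bar>real_of_int (a * r - p * q)\<bar> = 1" using assms(3) by (metis of_int_abs of_int_1)
  ultimately show ?thesis using assms by (simp add: abs_div_pos)
qed

lemma pair_close:
  assumes fp: "fpair p1 q1 p2 q2" and cx: "cbtw p1 q1 p2 q2 x" and cy: "cbtw p1 q1 p2 q2 y"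
  shows "\<bar>y - x\<bar> \<le> 1 / (real_of_int q1 * real_of_int q2)"
proof -
  have a: "q1 > 0" "q2 > 0" "\<bar>p1 * q2 - p2 * q1\<bar> = 1" using fp by (auto simp: fpair_def)
  have "\<bar>y - x\<bar> \<le> \<bar>real_of_int p2 / real_of_int q2 - real_of_int p1 / real_of_int q1\<bar>"
    using R2[of x "real_of_int p1 / real_of_int q1" "real_of_int p2 / real_of_int q2" y] cx cy
    unfolding cbtw_iff[OF a(1,2)] by simp
  also have "\<dots> = 1 / (real_of_int q2 * real_of_int q1)"
    by (rule frac_dist) (use a in \<open>auto simp: abs_minus_commute\<close>)
  finally show ?thesis by (simp add: mult.commute)
qed

lemma descent:
  assumes x: "x \<notin> \<rat>" and yx: "y \<noteq> x" and fp: "fpair p1 q1 p2 q2" and bx: "btw p1 q1 p2 q2 x"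
    and cy: "cbtw p1 q1 p2 q2 y" and Q0: "Q0 \<le> q1"
  shows "\<exists>p1' q1' p2' q2' i. fpair p1' q1' p2' q2' \<and> btw p1' q1' p2' q2' x \<and> cbtw p1' q1' p2' q2' y \<and> Q0 \<le> q1'
     \<and> i \<ge> 0 \<and> btw (i * p1' + p2') (i * q1' + q2') ((i + 1) * p1' + p2') ((i + 1) * q1' + q2') x
     \<and> \<not> cbtw (i * p1' + p2') (i * q1' + q2') ((i + 1) * p1' + p2') ((i + 1) * q1' + q2') y"
  using fp bx cy Q0
proof (induction "nat (\<lfloor>1 / \<bar>y - x\<bar>\<rfloor> - q1 * q2)" arbitrary: p1 q1 p2 q2 rule: less_induct)
  case less
  obtain i where i: "i \<ge> 0" and bi: "btw (i * p1 + p2) (i * q1 + q2) ((i + 1) * p1 + p2) ((i + 1) * q1 + q2) x"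
    using step_pair[OF less.prems(1) x less.prems(2)] by blast
  show ?case
  proof (cases "cbtw (i * p1 + p2) (i * q1 + q2) ((i + 1) * p1 + p2) ((i + 1) * q1 + q2) y")
    case False
    thus ?thesis using less.prems i bi by blast
  next
    case True
    note cp = child_pair[OF less.prems(1) i]
    define b1 b2 where "b1 = i * q1 + q2" "b2 = (i + 1) * q1 + q2"
    have a: "1 \<le> q1" "q1 \<le> q2" using less.prems(1) by (auto simp: fpair_def)
    have b1: "b1 \<ge> q2" using cp(2) by (simp add: b1_b2_def)
    have b2: "b2 \<ge> q1 + q2" using cp(3) by (simp add: b1_b2_def)
    have d0: "\<bar>y - x\<bar> > 0" using yx by simp
    have close: "\<bar>y - x\<bar> \<le> 1 / (real_of_int b1 * real_of_int b2)"
      unfolding b1_b2_def by (rule pair_close[OF cp(1) btw_cbtw[OF bi] True])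
    have bpos: "real_of_int b1 * real_of_int b2 > 0" using a b1 b2 by simp
    have "real_of_int b1 * real_of_int b2 \<le> 1 / \<bar>y - x\<bar>"
      using close d0 bpos by (simp add: field_simps)
    hence fl: "b1 * b2 \<le> \<lfloor>1 / \<bar>y - x\<bar>\<rfloor>" by (simp add: le_floor_iff)
    have "q1 * q2 < b1 * b2"
    proof -
      have "q1 * q2 < (q1 + q2) * q2" using a by (simp add: algebra_simps)
      also have "\<dots> \<le> b2 * b1" using a b1 b2 by (intro mult_mono) auto
      finally show ?thesis by (simp add: mult.commute)
    qed
    hence lt: "nat (\<lfloor>1 / \<bar>y - x\<bar>\<rfloor> - b1 * b2) < nat (\<lfloor>1 / \<bar>y - x\<bar>\<rfloor> - q1 * q2)" using fl by linarith
    have Q0': "Q0 \<le> b1" using less.prems(4) a b1 by simp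
    show ?thesis
      using less.hyps[OF lt[unfolded b1_b2_def] cp(1) bi True Q0'[unfolded b1_b2_def]] by blast
  qed
qed

context fsetup begin

lemma holder_at:
  assumes xN: "x \<notin> Nset" and a0: "0 < \<alpha>" and a1: "\<alpha> < Re k / 2"
  shows "\<exists>C \<delta>. \<delta> > 0 \<and> (\<forall>y. \<bar>y - x\<bar> < \<delta> \<longrightarrow> cmod (fstar k f y - fstar k f x) \<le> C * \<bar>y - x\<bar> powr \<alpha>)"
proof -
  define \<sigma> where "\<sigma> = Re k"
  have sig: "\<sigma> > 0" using k_pos by (simp add: \<sigma>_def)
  have Kp: "K \<ge> 0" using K_props by simp
  have x: "x \<notin> \<rat>" using xN by (simp add: Nset_def)
  define c where "c = \<sigma> / \<alpha> - 2"
  have c0: "c > 0" using a0 a1 by (simp add: c_def \<sigma>_def field_simps)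
  define m where "m = nat \<lceil>4 / c\<rceil>"
  define \<tau> where "\<tau> = 1 / real (Suc m)"
  have tau0: "\<tau> > 0" by (simp add: \<tau>_def)
  have tau1: "\<tau> \<le> 1" by (simp add: \<tau>_def)
  have tauc: "\<tau> \<le> c / 4"
  proof -
    have "real (Suc m) \<ge> 4 / c" unfolding m_def by linarith
    hence "1 / real (Suc m) \<le> 1 / (4 / c)" using c0 by (intro divide_left_mono) auto
    thus ?thesis using c0 by (simp add: \<tau>_def)
  qed
  define S where "S = (1 + \<tau>) * (2 + \<tau>)"
  have S0: "S > 0" using tau0 by (simp add: S_def)
  have aS: "\<alpha> * S \<le> \<sigma>"
  proof -
    have "S = 2 + 3 * \<tau> + \<tau> * \<tau>" by (simp add: S_def algebra_simps)
    also have "\<dots> \<le> 2 + 4 * \<tau>" using tau0 tau1 by (simp add: mult_le_cancel_left1)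
    also have "\<dots> \<le> 2 + c" using tauc by simp
    also have "\<dots> = \<sigma> / \<alpha>" by (simp add: c_def)
    finally have "S \<le> \<sigma> / \<alpha>" .
    thus ?thesis using a0 by (simp add: field_simps)
  qed
  obtain Q0 where Q01: "Q0 \<ge> 1" and dioQ: "\<forall>q a. q \<ge> Q0 \<longrightarrow> \<bar>x - of_int a / of_int q\<bar> \<ge> real_of_int q powr (-(2 + 1 / real (Suc m)))"
    using dio[OF xN, of m] by blast
  have DIO: "\<bar>x - of_int a / of_int q\<bar> \<ge> real_of_int q powr (-(2 + \<tau>))" if "q \<ge> Q0" for q a
    using dioQ that by (simp add: \<tau>_def)
  obtain p1 q1 p2 q2 where fp0: "fpair p1 q1 p2 q2" and b0: "btw p1 q1 p2 q2 x" and N0: "int (nat Q0) \<le> q1"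
    using exist_pair[OF x, of "nat Q0"] by blast
  have Q0q: "Q0 \<le> q1" using N0 Q01 by simp
  have "\<exists>d>0. \<forall>y. dist y x < d \<longrightarrow> y \<in> {z. btw p1 q1 p2 q2 z}"
    using open_btw[of p1 q1 p2 q2] b0 unfolding open_dist by simp
  then obtain \<delta> where d0: "\<delta> > 0" and dB: "\<And>y. dist y x < \<delta> \<Longrightarrow> y \<in> {z. btw p1 q1 p2 q2 z}"
    by (elim exE conjE) auto
  define C where "C = 4 * K * 2 powr ((2 + \<tau>) * \<alpha>)"
  show ?thesis
  proof (rule exI[of _ C], rule exI[of _ \<delta>], intro conjI allI impI)
    show "\<delta> > 0" by fact
    fix y assume yd: "\<bar>y - x\<bar> < \<delta>"
    show "cmod (fstar k f y - fstar k f x) \<le> C * \<bar>y - x\<bar> powr \<alpha>"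
    proof (cases "y = x")
      case True
      thus ?thesis by simp
    next
      case yx: False
      have by0: "btw p1 q1 p2 q2 y" using dB[of y] yd by (simp add: dist_real_def)
      obtain P1 Q1 P2 Q2 i where fp: "fpair P1 Q1 P2 Q2" and bx: "btw P1 Q1 P2 Q2 x" and cy: "cbtw P1 Q1 P2 Q2 y"
        and QQ: "Q0 \<le> Q1" and i: "i \<ge> 0"
        and bix: "btw (i * P1 + P2) (i * Q1 + Q2) ((i + 1) * P1 + P2) ((i + 1) * Q1 + Q2) x"
        and niy: "\<not> cbtw (i * P1 + P2) (i * Q1 + Q2) ((i + 1) * P1 + P2) ((i + 1) * Q1 + Q2) y"
        using descent[OF x yx fp0 b0 btw_cbtw[OF by0] Q0q] by blast
      have a: "1 \<le> Q1" "Q1 \<le> Q2" "\<bar>P1 * Q2 - P2 * Q1\<bar> = 1" using fp by (auto simp: fpair_def)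
      define A1 D1 A2 D2 where "A1 = i * P1 + P2" "D1 = i * Q1 + Q2" "A2 = (i + 1) * P1 + P2" "D2 = (i + 1) * Q1 + Q2"
      note cp = child_pair[OF fp i]
      have D1: "D1 \<ge> Q2" using cp(2) by (simp add: A1_D1_A2_D2_def)
      have D2e: "D2 = D1 + Q1" by (simp add: A1_D1_A2_D2_def algebra_simps)
      have D1p: "D1 > 0" "D2 > 0" using D1 D2e a by auto
      define w1 w2 where "w1 = real_of_int A1 / real_of_int D1" "w2 = real_of_int A2 / real_of_int D2"
      define P where "P = real_of_int P1 / real_of_int Q1"
      have fa: "cmod (fstar k f y - fstar k f x) \<le> 4 * K * real_of_int Q1 powr (- \<sigma>)"
      proof -
        have e1: "cmod (fstar k f y - G P1 Q1) \<le> K * (real_of_int Q1 powr (- \<sigma>) + real_of_int Q2 powr (- \<sigma>))"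
          unfolding \<sigma>_def by (rule fstar_pair_bound[OF fp cy])
        have e2: "cmod (fstar k f x - G P1 Q1) \<le> K * (real_of_int Q1 powr (- \<sigma>) + real_of_int Q2 powr (- \<sigma>))"
          unfolding \<sigma>_def by (rule fstar_pair_bound[OF fp btw_cbtw[OF bx]])
        have e3: "real_of_int Q2 powr (- \<sigma>) \<le> real_of_int Q1 powr (- \<sigma>)" using a sig by (intro powr_anti) auto
        have "K * (real_of_int Q1 powr (- \<sigma>) + real_of_int Q2 powr (- \<sigma>)) \<le> K * (2 * real_of_int Q1 powr (- \<sigma>))"
          using e3 Kp by (intro mult_left_mono) auto
        moreover have "cmod (fstar k f y - fstar k f x) \<le> cmod (fstar k f y - G P1 Q1) + cmod (fstar k f x - G P1 Q1)"
          using norm_triangle_ineq4[of "fstar k f y - G P1 Q1" "fstar k f x - G P1 Q1"] by simp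
        ultimately show ?thesis using e1 e2 by (simp add: algebra_simps)
      qed
      have bxr: "(x - w1) * (w2 - x) > 0" using bix unfolding btw_iff[OF D1p[unfolded A1_D1_A2_D2_def]]
        by (simp add: w1_w2_def A1_D1_A2_D2_def)
      have nyr: "(y - w1) * (w2 - y) < 0" using niy unfolding cbtw_iff[OF D1p[unfolded A1_D1_A2_D2_def]]
        by (simp add: w1_w2_def A1_D1_A2_D2_def)
      have yb: "\<bar>y - x\<bar> \<ge> min \<bar>x - w1\<bar> \<bar>x - w2\<bar>" by (rule R3[OF bxr nyr])
      have DQ: "Q0 \<le> D1" "Q0 \<le> D2" using QQ a D1 D2e by auto
      have c1: "\<bar>x - w1\<bar> \<ge> real_of_int D1 powr (-(2 + \<tau>))" unfolding w1_w2_def by (rule DIO[OF DQ(1)])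
      have c2: "\<bar>x - w2\<bar> \<ge> real_of_int D2 powr (-(2 + \<tau>))" unfolding w1_w2_def by (rule DIO[OF DQ(2)])
      have c3: "real_of_int D2 powr (-(2 + \<tau>)) \<le> real_of_int D1 powr (-(2 + \<tau>))"
        using D1p D2e a tau0 by (intro powr_anti) auto
      have yD2: "\<bar>y - x\<bar> \<ge> real_of_int D2 powr (-(2 + \<tau>))" using yb c1 c2 c3 by linarith
      have xP: "\<bar>x - P\<bar> \<le> max \<bar>w1 - P\<bar> \<bar>w2 - P\<bar>" by (rule R4[OF bxr])
      have w1P: "\<bar>w1 - P\<bar> = 1 / (real_of_int D1 * real_of_int Q1)"
        unfolding w1_w2_def P_def
      proof (rule frac_dist)
        show "D1 > 0" "Q1 > 0" using D1p a by auto
        have "A1 * Q1 - P1 * D1 = P2 * Q1 - P1 * Q2" by (simp add: A1_D1_A2_D2_def algebra_simps)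
        thus "\<bar>A1 * Q1 - P1 * D1\<bar> = 1" using a by (simp add: abs_minus_commute)
      qed
      have w2P: "\<bar>w2 - P\<bar> = 1 / (real_of_int D2 * real_of_int Q1)"
        unfolding w1_w2_def P_def
      proof (rule frac_dist)
        show "D2 > 0" "Q1 > 0" using D1p a by auto
        have "A2 * Q1 - P1 * D2 = P2 * Q1 - P1 * Q2" by (simp add: A1_D1_A2_D2_def algebra_simps)
        thus "\<bar>A2 * Q1 - P1 * D2\<bar> = 1" using a by (simp add: abs_minus_commute)
      qed
      have "1 / (real_of_int D2 * real_of_int Q1) \<le> 1 / (real_of_int D1 * real_of_int Q1)"
        using D1p D2e a by (intro divide_left_mono mult_right_mono) auto
      hence xP2: "\<bar>x - P\<bar> \<le> 1 / (real_of_int D1 * real_of_int Q1)" using xP w1P w2P by linarith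
      have dP: "\<bar>x - P\<bar> \<ge> real_of_int Q1 powr (-(2 + \<tau>))" unfolding P_def by (rule DIO[OF QQ])
      have Q1r: "real_of_int Q1 \<ge> 1" using a by simp
      have D1b: "real_of_int D1 \<le> real_of_int Q1 powr (1 + \<tau>)"
      proof -
        have "real_of_int Q1 powr (-(2 + \<tau>)) \<le> 1 / (real_of_int D1 * real_of_int Q1)" using dP xP2 by linarith
        hence "real_of_int D1 * (real_of_int Q1 * real_of_int Q1 powr (-(2 + \<tau>))) \<le> 1"
          using D1p Q1r by (simp add: field_simps)
        moreover have "real_of_int Q1 * real_of_int Q1 powr (-(2 + \<tau>)) = real_of_int Q1 powr (-(1 + \<tau>))"
        proof -
          have "real_of_int Q1 powr 1 * real_of_int Q1 powr (-(2 + \<tau>)) = real_of_int Q1 powr (1 + (-(2 + \<tau>)))"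
            by (rule powr_add[symmetric])
          moreover have "real_of_int Q1 powr 1 = real_of_int Q1" using Q1r by simp
          moreover have "1 + (-(2 + \<tau>)) = -(1 + \<tau>)" by simp
          ultimately show ?thesis by simp
        qed
        ultimately have "real_of_int D1 * real_of_int Q1 powr (-(1 + \<tau>)) \<le> 1" by simp
        moreover have "real_of_int Q1 powr (-(1 + \<tau>)) = 1 / real_of_int Q1 powr (1 + \<tau>)"
          by (subst powr_minus) (simp add: divide_inverse)
        moreover have "real_of_int Q1 powr (1 + \<tau>) > 0" using Q1r by simp
        ultimately show ?thesis by (simp add: field_simps)
      qed
      have D2b: "real_of_int D2 \<le> 2 * real_of_int Q1 powr (1 + \<tau>)"
      proof -
        have "real_of_int D2 = real_of_int D1 + real_of_int Q1" using D2e by simp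
        also have "\<dots> \<le> 2 * real_of_int D1" using D1 a by simp
        finally show ?thesis using D1b by simp
      qed
      have f1: "real_of_int D2 powr (-(2 + \<tau>)) \<ge> (2 * real_of_int Q1 powr (1 + \<tau>)) powr (-(2 + \<tau>))"
        using D2b D1p tau0 by (intro powr_anti) auto
      have f2: "(2 * real_of_int Q1 powr (1 + \<tau>)) powr (-(2 + \<tau>)) = 2 powr (-(2 + \<tau>)) * real_of_int Q1 powr (- S)"
      proof -
        have "(2 * real_of_int Q1 powr (1 + \<tau>)) powr (-(2 + \<tau>)) = 2 powr (-(2 + \<tau>)) * (real_of_int Q1 powr (1 + \<tau>)) powr (-(2 + \<tau>))"
          using Q1r by (simp add: powr_mult)
        also have "(real_of_int Q1 powr (1 + \<tau>)) powr (-(2 + \<tau>)) = real_of_int Q1 powr ((1 + \<tau>) * (-(2 + \<tau>)))"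
          by (simp add: powr_powr)
        also have "(1 + \<tau>) * (-(2 + \<tau>)) = - S" by (simp add: S_def algebra_simps)
        finally show ?thesis .
      qed
      have yS: "real_of_int Q1 powr (- S) \<le> 2 powr (2 + \<tau>) * \<bar>y - x\<bar>"
      proof -
        define t :: real where "t = 2 powr (2 + \<tau>)"
        define t' :: real where "t' = 2 powr (-(2 + \<tau>))"
        define X where "X = real_of_int Q1 powr (- S)"
        have h1: "t' * X \<le> \<bar>y - x\<bar>" using yD2 f1 f2 unfolding t'_def X_def by linarith
        have tt: "t * t' = 1" unfolding t_def t'_def by (simp add: powr_add[symmetric])
        have t0: "t \<ge> 0" by (simp add: t_def)
        have "t * (t' * X) \<le> t * \<bar>y - x\<bar>" using h1 t0 by (rule mult_left_mono)
        moreover have "t * (t' * X) = X" using tt by (simp add: mult.assoc[symmetric])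
        ultimately show ?thesis unfolding t_def X_def by simp
      qed
      have g1: "real_of_int Q1 powr (- \<sigma>) \<le> real_of_int Q1 powr (- (\<alpha> * S))"
        using aS Q1r by (intro powr_mono) auto
      have g2: "real_of_int Q1 powr (- (\<alpha> * S)) = (real_of_int Q1 powr (- S)) powr \<alpha>"
        by (simp add: powr_powr mult.commute)
      have g3: "(real_of_int Q1 powr (- S)) powr \<alpha> \<le> (2 powr (2 + \<tau>) * \<bar>y - x\<bar>) powr \<alpha>"
        using yS a0 by (intro powr_mono2) auto
      have g4: "(2 powr (2 + \<tau>) * \<bar>y - x\<bar>) powr \<alpha> = 2 powr ((2 + \<tau>) * \<alpha>) * \<bar>y - x\<bar> powr \<alpha>"
        by (simp add: powr_mult powr_powr)
      have "real_of_int Q1 powr (- \<sigma>) \<le> 2 powr ((2 + \<tau>) * \<alpha>) * \<bar>y - x\<bar> powr \<alpha>"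
        using g1 g2 g3 g4 by linarith
      hence "4 * K * real_of_int Q1 powr (- \<sigma>) \<le> 4 * K * (2 powr ((2 + \<tau>) * \<alpha>) * \<bar>y - x\<bar> powr \<alpha>)"
        using Kp by (intro mult_left_mono) auto
      thus ?thesis using fa by (simp add: C_def algebra_simps)
    qed
  qed
qed

end

lemma holder_deriv:
  fixes g :: "real \<Rightarrow> complex"
  assumes a1: "\<alpha> > 1" and d: "\<delta> > 0"
    and hb: "\<forall>y. \<bar>y - x\<bar> < \<delta> \<longrightarrow> cmod (g y - g x) \<le> C * \<bar>y - x\<bar> powr \<alpha>"
  shows "(g has_vector_derivative 0) (at x)"
proof -
  have lin: "bounded_linear (\<lambda>h::real. h *\<^sub>R (0::complex))" by simp
  have lim0: "((\<lambda>y. \<bar>C\<bar> * \<bar>y - x\<bar> powr (\<alpha> - 1)) \<longlongrightarrow> 0) (at x)"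
  proof -
    have "((\<lambda>y. \<bar>y - x\<bar>) \<longlongrightarrow> 0) (at x)"
    proof -
      have "((\<lambda>y. \<bar>y - x\<bar>) \<longlongrightarrow> \<bar>x - x\<bar>) (at x)" by (intro tendsto_intros)
      thus ?thesis by simp
    qed
    hence "((\<lambda>y. \<bar>y - x\<bar> powr (\<alpha> - 1)) \<longlongrightarrow> 0) (at x)"
      using a1 by (intro tendsto_zero_powrI) auto
    thus ?thesis by (rule tendsto_mult_right_zero)
  qed
  have ev: "eventually (\<lambda>y. norm (norm (g y - g x - (y - x) *\<^sub>R 0) / norm (y - x)) \<le> \<bar>C\<bar> * \<bar>y - x\<bar> powr (\<alpha> - 1)) (at x)"
    unfolding eventually_at
  proof (rule exI[of _ \<delta>], intro conjI ballI impI)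
    show "\<delta> > 0" by fact
    fix y :: real assume y: "y \<noteq> x \<and> dist y x < \<delta>"
    hence yx: "\<bar>y - x\<bar> > 0" "\<bar>y - x\<bar> < \<delta>" by (auto simp: dist_real_def)
    have "cmod (g y - g x) \<le> \<bar>C\<bar> * \<bar>y - x\<bar> powr \<alpha>"
      using hb yx by (meson abs_ge_self mult_right_mono order_trans powr_ge_zero)
    hence "cmod (g y - g x) / \<bar>y - x\<bar> \<le> \<bar>C\<bar> * \<bar>y - x\<bar> powr \<alpha> / \<bar>y - x\<bar>"
      using yx by (intro divide_right_mono) auto
    also have "\<bar>C\<bar> * \<bar>y - x\<bar> powr \<alpha> / \<bar>y - x\<bar> = \<bar>C\<bar> * \<bar>y - x\<bar> powr (\<alpha> - 1)"
      using yx by (simp add: powr_diff)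
    finally show "norm (norm (g y - g x - (y - x) *\<^sub>R 0) / norm (y - x)) \<le> \<bar>C\<bar> * \<bar>y - x\<bar> powr (\<alpha> - 1)"
      by (simp add: mult.assoc)
  qed
  have "((\<lambda>y. norm (g y - g x - (y - x) *\<^sub>R 0) / norm (y - x)) \<longlongrightarrow> 0) (at x)"
    by (rule Lim_null_comparison[OF ev lim0])
  hence "(g has_derivative (\<lambda>h. h *\<^sub>R 0)) (at x)"
    unfolding has_derivative_iff_norm using lin by simp
  thus ?thesis unfolding has_vector_derivative_def .
qed

theorem theorem1p4:
  fixes k :: complex and f :: "rat \<Rightarrow> complex" and h :: "real \<Rightarrow> complex"
  assumes k_pos: "Re k > 0"
    and f_per: "\<And>x. f (x + 1) = f x"
    and h_eq: "\<And>x::rat. x \<noteq> 0 \<Longrightarrow>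
       h (of_rat x) = f x - (of_real \<bar>of_rat x\<bar> :: complex) powr (-k) * f (- 1 / x)"
    and h_bigO: "\<exists>C. \<forall>x::real. 0 < \<bar>x\<bar> \<and> \<bar>x\<bar> \<le> 1 \<longrightarrow> cmod (h x) \<le> C * \<bar>x\<bar> powr (- Re k)"
  shows
    "(\<forall>x. x \<notin> \<rat> \<longrightarrow> (\<exists>L. (fstar_rat k f \<longlongrightarrow> L) (at x within \<rat>)))
     \<and> (\<forall>x. x \<notin> \<rat> \<longrightarrow> isCont (fstar k f) x)
     \<and> ((\<forall>\<epsilon>>0. \<forall>\<^sub>F x in at (0::real). cmod (h x) \<le> \<epsilon> * \<bar>x\<bar> powr (- Re k))
          \<longrightarrow> continuous_on UNIV (fstar k f))
     \<and> (\<exists>X. - X \<in> null_sets lborel \<and>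
          (\<forall>x\<in>X. \<forall>\<alpha>::real. 0 < \<alpha> \<and> \<alpha> < Re k / 2 \<longrightarrow>
             (\<exists>C \<delta>. \<delta> > 0 \<and> (\<forall>y. \<bar>y - x\<bar> < \<delta> \<longrightarrow>
                cmod (fstar k f y - fstar k f x) \<le> C * \<bar>y - x\<bar> powr \<alpha>))))
     \<and> (Re k > 2 \<longrightarrow> (AE x in lborel. (fstar k f has_vector_derivative 0) (at x)))"
proof -
  obtain C where hC: "\<forall>x::real. 0 < \<bar>x\<bar> \<and> \<bar>x\<bar> \<le> 1 \<longrightarrow> cmod (h x) \<le> C * \<bar>x\<bar> powr (- Re k)"
    using h_bigO by blast
  interpret F: fsetup k f h C
    by (rule fsetup.intro) (use k_pos f_per h_eq hC in auto)
  have P1: "\<forall>x. x \<notin> \<rat> \<longrightarrow> (\<exists>L. (fstar_rat k f \<longlongrightarrow> L) (at x within \<rat>))"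
    using F.lim_exists by blast
  have P2: "\<forall>x. x \<notin> \<rat> \<longrightarrow> isCont (fstar k f) x"
    using F.isCont_irr by blast
  have P3: "(\<forall>\<epsilon>>0. \<forall>\<^sub>F x in at (0::real). cmod (h x) \<le> \<epsilon> * \<bar>x\<bar> powr (- Re k))
          \<longrightarrow> continuous_on UNIV (fstar k f)"
    using F.cont_all by blast
  have P4: "\<exists>X. - X \<in> null_sets lborel \<and>
          (\<forall>x\<in>X. \<forall>\<alpha>::real. 0 < \<alpha> \<and> \<alpha> < Re k / 2 \<longrightarrow>
             (\<exists>C \<delta>. \<delta> > 0 \<and> (\<forall>y. \<bar>y - x\<bar> < \<delta> \<longrightarrow>
                cmod (fstar k f y - fstar k f x) \<le> C * \<bar>y - x\<bar> powr \<alpha>)))"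
  proof (rule exI[of _ "- Nset"], intro conjI ballI allI impI)
    show "- (- Nset) \<in> null_sets lborel" using Nset_null by simp
    fix x \<alpha> assume "x \<in> - Nset" "0 < \<alpha> \<and> \<alpha> < Re k / 2"
    thus "\<exists>C \<delta>. \<delta> > 0 \<and> (\<forall>y. \<bar>y - x\<bar> < \<delta> \<longrightarrow> cmod (fstar k f y - fstar k f x) \<le> C * \<bar>y - x\<bar> powr \<alpha>)"
      using F.holder_at[of x \<alpha>] by simp
  qed
  have P5: "Re k > 2 \<longrightarrow> (AE x in lborel. (fstar k f has_vector_derivative 0) (at x))"
  proof
    assume k2: "Re k > 2"
    show "AE x in lborel. (fstar k f has_vector_derivative 0) (at x)"
    proof (rule AE_I'[OF Nset_null])
      show "{x \<in> space lborel. \<not> (fstar k f has_vector_derivative 0) (at x)} \<subseteq> Nset"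
      proof
        fix x assume xs: "x \<in> {x \<in> space lborel. \<not> (fstar k f has_vector_derivative 0) (at x)}"
        show "x \<in> Nset"
        proof (rule ccontr)
          assume xN: "x \<notin> Nset"
          define \<alpha> where "\<alpha> = (1 + Re k / 2) / 2"
          have a: "0 < \<alpha>" "\<alpha> < Re k / 2" "\<alpha> > 1" using k2 by (auto simp: \<alpha>_def)
          obtain C \<delta> where d: "\<delta> > 0" and hb: "\<forall>y. \<bar>y - x\<bar> < \<delta> \<longrightarrow> cmod (fstar k f y - fstar k f x) \<le> C * \<bar>y - x\<bar> powr \<alpha>"
            using F.holder_at[OF xN a(1) a(2)] by blast
          have "(fstar k f has_vector_derivative 0) (at x)" by (rule holder_deriv[OF a(3) d hb])
          thus False using xs by simp
        qed
      qed
    qed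
  qed
  show ?thesis using P1 P2 P3 P4 P5 by blast
qed

end
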